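(* Let $n\geq 2$, $c\geq 1$, and let $L_{n,c}$ be the free metabelian nilpotent Lie algebra of nilpotency class $c$ generated by $x_1,\ldots,x_n$ over a field $K$ of characteristic zero. For $u\in L_{n,c}$ let \[\varepsilon_u=\exp(\mathrm{ad}\,u)=1+\mathrm{ad}\,u+\tfrac{1}{2}\mathrm{ad}^2u+\cdots+\tfrac{1}{(c-1)!}\mathrm{ad}^{c-1}u,\] where $(\mathrm{ad}\,u)(v)=[v,u]$. Let $\mathrm{Inn}(L_{n,c}^{S_n})$ be the set of inner automorphisms $\varepsilon_u$ ($u\in L_{n,c}$) of $L_{n,c}$ that map $L_{n,c}^{S_n}$ into itself. Then \[\mathrm{Inn}(L_{n,c}^{S_n})=\{\varepsilon_u\mid u\in L_{n,c}^{S_n}\setminus\gamma^c(L_{n,c})^{S_n}\}\cup\{1\}.\]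
   Context: $L_{n,c}=L_n/(L_n''+\gamma^{c+1}(L_n))$, where $L_n$ is the free Lie algebra on $x_1,\ldots,x_n$, $\gamma^1=L_n$, $\gamma^k=[\gamma^{k-1},L_n]$, $L_n''=[L_n',L_n']$; $\gamma^c(L_{n,c})$ is the image of $\gamma^c(L_n)$ in $L_{n,c}$. The symmetric group $S_n$ acts on $L_{n,c}$ by $\pi\, p(x_1,\ldots,x_n)=p(x_{\pi(1)},\ldots,x_{\pi(n)})$; $L_{n,c}^{S_n}$ is the algebra of symmetric elements and $\gamma^c(L_{n,c})^{S_n}$ the set of symmetric elements of $\gamma^c(L_{n,c})$. Each $\varepsilon_u$ is an automorphism of $L_{n,c}$, and $\varepsilon_u=1$ when $u\in\gamma^c(L_{n,c})$. *)

theory Defs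
  imports "HOL-Combinatorics.Permutations"
begin

text \<open>Noncommutative polynomials (free associative algebra) over K in variables
indexed by naturals, represented as coefficient functions on words.
The free Lie algebra L_n is modelled as the Lie subalgebra of the free
associative algebra generated by x_0, ..., x_(n-1) (Lie polynomials).\<close>

type_synonym 'k ncpoly = "nat list \<Rightarrow> 'k"

definition nczero :: "'k::field ncpoly" where
  "nczero = (\<lambda>w. 0)"

definition ncadd :: "'k::field ncpoly \<Rightarrow> 'k ncpoly \<Rightarrow> 'k ncpoly" where
  "ncadd p q = (\<lambda>w. p w + q w)"

definition ncsub :: "'k::field ncpoly \<Rightarrow> 'k ncpoly \<Rightarrow> 'k ncpoly" where
  "ncsub p q = (\<lambda>w. p w - q w)"

definition ncsmul :: "'k::field \<Rightarrow> 'k ncpoly \<Rightarrow> 'k ncpoly" where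
  "ncsmul a p = (\<lambda>w. a * p w)"

definition ncmul :: "'k::field ncpoly \<Rightarrow> 'k ncpoly \<Rightarrow> 'k ncpoly" where
  "ncmul p q = (\<lambda>w. \<Sum>i\<le>length w. p (take i w) * q (drop i w))"

definition ncvar :: "nat \<Rightarrow> 'k::field ncpoly" where
  "ncvar i = (\<lambda>w. if w = [i] then 1 else 0)"

definition lbr :: "'k::field ncpoly \<Rightarrow> 'k ncpoly \<Rightarrow> 'k ncpoly" where
  "lbr p q = ncsub (ncmul p q) (ncmul q p)"

inductive_set freeLie :: "nat \<Rightarrow> 'k::field ncpoly set" for n :: nat where
  zero: "nczero \<in> freeLie n"
| var: "i < n \<Longrightarrow> ncvar i \<in> freeLie n"
| add: "p \<in> freeLie n \<Longrightarrow> q \<in> freeLie n \<Longrightarrow> ncadd p q \<in> freeLie n"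
| smul: "p \<in> freeLie n \<Longrightarrow> ncsmul a p \<in> freeLie n"
| br: "p \<in> freeLie n \<Longrightarrow> q \<in> freeLie n \<Longrightarrow> lbr p q \<in> freeLie n"

inductive_set lspan :: "'k::field ncpoly set \<Rightarrow> 'k ncpoly set" for S where
  zero: "nczero \<in> lspan S"
| base: "p \<in> S \<Longrightarrow> p \<in> lspan S"
| add: "p \<in> lspan S \<Longrightarrow> q \<in> lspan S \<Longrightarrow> ncadd p q \<in> lspan S"
| smul: "p \<in> lspan S \<Longrightarrow> ncsmul a p \<in> lspan S"

definition brset :: "'k::field ncpoly set \<Rightarrow> 'k ncpoly set \<Rightarrow> 'k ncpoly set" where
  "brset A B = lspan {lbr a b | a b. a \<in> A \<and> b \<in> B}"

primrec lcs :: "nat \<Rightarrow> nat \<Rightarrow> 'k::field ncpoly set" where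
  "lcs n 0 = freeLie n"
| "lcs n (Suc k) = brset (lcs n k) (freeLie n)"

text \<open>Lower central series: gammaL n 1 = L_n, gammaL n (k+1) = [gammaL n k, L_n].\<close>
definition gammaL :: "nat \<Rightarrow> nat \<Rightarrow> 'k::field ncpoly set" where
  "gammaL n k = lcs n (k - 1)"

definition derived2 :: "nat \<Rightarrow> 'k::field ncpoly set" where
  "derived2 n = brset (gammaL n 2) (gammaL n 2)"

definition idealI :: "nat \<Rightarrow> nat \<Rightarrow> 'k::field ncpoly set" where
  "idealI n c = {ncadd a b | a b. a \<in> derived2 n \<and> b \<in> gammaL n (c + 1)}"

definition relI :: "nat \<Rightarrow> nat \<Rightarrow> ('k::field ncpoly \<times> 'k ncpoly) set" where
  "relI n c = {(p, q). p \<in> freeLie n \<and> q \<in> freeLie n \<and> ncsub p q \<in> idealI n c}"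

text \<open>L_(n,c) = L_n / (L_n'' + gamma^(c+1)(L_n)), elements are cosets.\<close>
definition Lnc :: "nat \<Rightarrow> nat \<Rightarrow> 'k::field ncpoly set set" where
  "Lnc n c = freeLie n // relI n c"

definition cls :: "nat \<Rightarrow> nat \<Rightarrow> 'k::field ncpoly \<Rightarrow> 'k ncpoly set" where
  "cls n c p = relI n c `` {p}"

text \<open>Action of a permutation: p(x_1..x_n) maps to p(x_pi(1)..x_pi(n)).\<close>
definition perm_act :: "(nat \<Rightarrow> nat) \<Rightarrow> 'k::field ncpoly \<Rightarrow> 'k ncpoly" where
  "perm_act \<pi> p = (\<lambda>w. p (map (inv \<pi>) w))"

definition symLnc :: "nat \<Rightarrow> nat \<Rightarrow> 'k::field ncpoly set set" where
  "symLnc n c = {C \<in> Lnc n c. \<forall>\<pi>. \<pi> permutes {..<n} \<longrightarrow>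
      (\<forall>p \<in> C. cls n c (perm_act \<pi> p) = C)}"

definition gcLnc :: "nat \<Rightarrow> nat \<Rightarrow> 'k::field ncpoly set set" where
  "gcLnc n c = cls n c ` gammaL n c"

definition ad :: "'k::field ncpoly \<Rightarrow> 'k ncpoly \<Rightarrow> 'k ncpoly" where
  "ad u v = lbr v u"

definition eps_rep :: "nat \<Rightarrow> 'k::field ncpoly \<Rightarrow> 'k ncpoly \<Rightarrow> 'k ncpoly" where
  "eps_rep c u v = (\<lambda>w. \<Sum>k<c. (1 / of_nat (fact k)) * (((ad u) ^^ k) v) w)"

definition epsL :: "nat \<Rightarrow> nat \<Rightarrow> 'k::field ncpoly set \<Rightarrow> 'k ncpoly set \<Rightarrow> 'k ncpoly set" where
  "epsL n c U = (\<lambda>C \<in> Lnc n c. cls n c (eps_rep c (SOME u. u \<in> U) (SOME p. p \<in> C)))"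

definition idL :: "nat \<Rightarrow> nat \<Rightarrow> 'k::field ncpoly set \<Rightarrow> 'k ncpoly set" where
  "idL n c = (\<lambda>C \<in> Lnc n c. C)"

definition Inn_sym :: "nat \<Rightarrow> nat \<Rightarrow> ('k::field ncpoly set \<Rightarrow> 'k ncpoly set) set" where
  "Inn_sym n c = {epsL n c U | U. U \<in> Lnc n c \<and>
      (\<forall>C \<in> symLnc n c. epsL n c U C \<in> symLnc n c)}"

end

theory Submission
  imports Defs "HOL-Library.Function_Algebras" "HOL-Combinatorics.Multiset_Permutations"
begin


lemma nczero_eq: "nczero = 0" by (simp add: nczero_def fun_eq_iff)
lemma ncadd_eq: "ncadd p q = p + q" by (simp add: ncadd_def fun_eq_iff)
lemma ncsub_eq: "ncsub p q = p - q" by (simp add: ncsub_def fun_eq_iff)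

lemma ncsmul_apply[simp]: "ncsmul a p w = a * p w" by (simp add: ncsmul_def)
lemma ncsmul_add: "ncsmul a (p + q) = ncsmul a p + ncsmul a q"
  by (simp add: fun_eq_iff distrib_left)
lemma ncsmul_diff: "ncsmul a (p - q) = ncsmul a p - ncsmul a q"
  by (simp add: fun_eq_iff right_diff_distrib)
lemma ncsmul_zero[simp]: "ncsmul a 0 = 0" by (simp add: fun_eq_iff)
lemma ncsmul_zero2[simp]: "ncsmul 0 p = 0" by (simp add: fun_eq_iff)
lemma ncsmul_one[simp]: "ncsmul 1 p = p" by (simp add: fun_eq_iff)
lemma ncsmul_minus: "ncsmul a (- p) = - ncsmul a p" by (simp add: fun_eq_iff)
lemma ncsmul_smul: "ncsmul a (ncsmul b p) = ncsmul (a*b) p" by (simp add: fun_eq_iff)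
lemma ncsmul_addl: "ncsmul (a+b) p = ncsmul a p + ncsmul b p" by (simp add: fun_eq_iff distrib_right)
lemma ncsmul_sum: "ncsmul a (\<Sum>i\<in>A. f i) = (\<Sum>i\<in>A. ncsmul a (f i))"
  by (induction A rule: infinite_finite_induct) (simp_all only: sum.infinite sum.empty sum.insert not_False_eq_True ncsmul_zero ncsmul_add)

lemma ncmul_add_left: "ncmul (p + q) r = ncmul p r + ncmul q r"
  by (simp add: ncmul_def fun_eq_iff distrib_right sum.distrib)
lemma ncmul_add_right: "ncmul r (p + q) = ncmul r p + ncmul r q"
  by (simp add: ncmul_def fun_eq_iff distrib_left sum.distrib)
lemma ncmul_diff_left: "ncmul (p - q) r = ncmul p r - ncmul q r"
  by (simp add: ncmul_def fun_eq_iff left_diff_distrib sum_subtractf)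
lemma ncmul_diff_right: "ncmul r (p - q) = ncmul r p - ncmul r q"
  by (simp add: ncmul_def fun_eq_iff right_diff_distrib sum_subtractf)
lemma ncmul_smul_left: "ncmul (ncsmul a p) r = ncsmul a (ncmul p r)"
  by (simp add: ncmul_def fun_eq_iff sum_distrib_left mult.assoc)
lemma ncmul_smul_right: "ncmul r (ncsmul a p) = ncsmul a (ncmul r p)"
  by (simp add: ncmul_def fun_eq_iff sum_distrib_left mult.assoc mult.left_commute)
lemma ncmul_zero_left[simp]: "ncmul 0 r = 0" by (simp add: ncmul_def fun_eq_iff)
lemma ncmul_zero_right[simp]: "ncmul r 0 = 0" by (simp add: ncmul_def fun_eq_iff)

lemma ncmul_assoc: "ncmul (ncmul p q) r = ncmul p (ncmul q r)"
proof (rule ext)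
  fix w :: "nat list"
  define N where "N = length w"
  define g where "g = (\<lambda>i j. p (take i w) * q (take j (drop i w)) * r (drop (i+j) w))"
  have "ncmul (ncmul p q) r w = (\<Sum>k\<le>N. \<Sum>i\<le>k. g i (k - i))"
    unfolding ncmul_def g_def N_def
    by (intro sum.cong refl) (auto simp: sum_distrib_right min_def take_drop intro!: sum.cong)
  also have "\<dots> = (\<Sum>(i,j)\<in>{(i,j). i+j \<le> N}. g i j)"
    by (rule sum.triangle_reindex_eq[symmetric])
  also have "\<dots> = (\<Sum>i\<le>N. \<Sum>j\<le>N - i. g i j)"
    by (subst sum.Sigma) (auto intro!: sum.reindex_bij_witness[where i=id and j=id])
  also have "\<dots> = ncmul p (ncmul q r) w"
    unfolding ncmul_def g_def N_def
    by (intro sum.cong refl) (auto simp: sum_distrib_left mult.assoc add.commute)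
  finally show "ncmul (ncmul p q) r w = ncmul p (ncmul q r) w" .
qed

lemma lbr_eq: "lbr p q = ncmul p q - ncmul q p" by (simp add: lbr_def ncsub_eq)

lemma lbr_add_left: "lbr (p + q) r = lbr p r + lbr q r"
  by (simp add: lbr_eq ncmul_add_left ncmul_add_right)
lemma lbr_add_right: "lbr r (p + q) = lbr r p + lbr r q"
  by (simp add: lbr_eq ncmul_add_left ncmul_add_right)
lemma lbr_diff_left: "lbr (p - q) r = lbr p r - lbr q r"
  by (simp add: lbr_eq ncmul_diff_left ncmul_diff_right)
lemma lbr_diff_right: "lbr r (p - q) = lbr r p - lbr r q"
  by (simp add: lbr_eq ncmul_diff_left ncmul_diff_right)
lemma lbr_smul_left: "lbr (ncsmul a p) r = ncsmul a (lbr p r)"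
  by (simp add: lbr_eq ncmul_smul_left ncmul_smul_right ncsmul_diff)
lemma lbr_smul_right: "lbr r (ncsmul a p) = ncsmul a (lbr r p)"
  by (simp add: lbr_eq ncmul_smul_left ncmul_smul_right ncsmul_diff)
lemma lbr_zero_left[simp]: "lbr 0 r = 0" by (simp add: lbr_eq)
lemma lbr_zero_right[simp]: "lbr r 0 = 0" by (simp add: lbr_eq)
lemma lbr_antisym: "lbr p q = - lbr q p" by (simp add: lbr_eq)
lemma lbr_self[simp]: "lbr p p = 0" by (simp add: lbr_eq)
lemma lbr_sum_left: "lbr (\<Sum>i\<in>A. f i) r = (\<Sum>i\<in>A. lbr (f i) r)"
  by (induction A rule: infinite_finite_induct) (simp_all only: sum.infinite sum.empty sum.insert not_False_eq_True lbr_zero_left lbr_add_left)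
lemma lbr_sum_right: "lbr r (\<Sum>i\<in>A. f i) = (\<Sum>i\<in>A. lbr r (f i))"
  by (induction A rule: infinite_finite_induct) (simp_all only: sum.infinite sum.empty sum.insert not_False_eq_True lbr_zero_right lbr_add_right)

lemma jacobi: "lbr (lbr a b) c = lbr (lbr a c) b + lbr a (lbr b c)"
  by (simp add: lbr_eq ncmul_diff_left ncmul_diff_right ncmul_assoc algebra_simps)


definition subsp :: "'k::field ncpoly set \<Rightarrow> bool" where
  "subsp S \<longleftrightarrow> 0 \<in> S \<and> (\<forall>p\<in>S. \<forall>q\<in>S. p + q \<in> S) \<and> (\<forall>a. \<forall>p\<in>S. ncsmul a p \<in> S)"

lemma subsp_0: "subsp S \<Longrightarrow> 0 \<in> S" by (simp add: subsp_def)
lemma subsp_add: "subsp S \<Longrightarrow> p \<in> S \<Longrightarrow> q \<in> S \<Longrightarrow> p + q \<in> S" by (simp add: subsp_def)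
lemma subsp_smul: "subsp S \<Longrightarrow> p \<in> S \<Longrightarrow> ncsmul a p \<in> S" by (simp add: subsp_def)
lemma subsp_uminus: "subsp S \<Longrightarrow> p \<in> S \<Longrightarrow> - p \<in> S"
proof -
  assume "subsp S" "p \<in> S"
  then have "ncsmul (-1) p \<in> S" by (rule subsp_smul)
  moreover have "ncsmul (-1) p = - p" by (simp add: fun_eq_iff)
  ultimately show ?thesis by simp
qed
lemma subsp_diff: "subsp S \<Longrightarrow> p \<in> S \<Longrightarrow> q \<in> S \<Longrightarrow> p - q \<in> S"
  using subsp_add[of S p "- q"] subsp_uminus[of S q] by simp
lemma subsp_sum: "subsp S \<Longrightarrow> (\<And>i. i \<in> A \<Longrightarrow> f i \<in> S) \<Longrightarrow> (\<Sum>i\<in>A. f i) \<in> S"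
proof (induction A rule: infinite_finite_induct)
  case (infinite A) then show ?case by (metis subsp_0 sum.infinite)
next
  case empty then show ?case by (metis subsp_0 sum.empty)
next
  case (insert x F) then show ?case by (metis subsp_add sum.insert insertI1 insertCI)
qed
lemma subsp_add_iff: "subsp S \<Longrightarrow> q \<in> S \<Longrightarrow> (p + q \<in> S) = (p \<in> S)"
  using subsp_diff[of S "p+q" q] subsp_add[of S p q] by auto
lemma subsp_diff_iff: "subsp S \<Longrightarrow> q \<in> S \<Longrightarrow> (p - q \<in> S) = (p \<in> S)"
  using subsp_add_iff[of S "-q" p] subsp_uminus[of S q] by simp
lemma subsp_diff_sym: "subsp S \<Longrightarrow> p - q \<in> S \<Longrightarrow> q - p \<in> S"
  using subsp_uminus[of S "p - q"] by simp
lemma subsp_diff_trans: "subsp S \<Longrightarrow> p - q \<in> S \<Longrightarrow> q - r \<in> S \<Longrightarrow> p - r \<in> S"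
  using subsp_add[of S "p - q" "q - r"] by simp
lemma subsp_Int: "subsp S \<Longrightarrow> subsp T \<Longrightarrow> subsp (S \<inter> T)"
  by (simp add: subsp_def)

lemma subsp_freeLie: "subsp (freeLie n)"
  unfolding subsp_def using freeLie.zero freeLie.add freeLie.smul
  by (auto simp: nczero_eq ncadd_eq)
lemma subsp_lspan: "subsp (lspan S)"
  unfolding subsp_def using lspan.zero lspan.add lspan.smul
  by (auto simp: nczero_eq ncadd_eq)
lemma lspan_least: "S \<subseteq> T \<Longrightarrow> subsp T \<Longrightarrow> lspan S \<subseteq> T"
proof
  fix p assume ST: "S \<subseteq> T" "subsp T" and "p \<in> lspan S"
  from \<open>p \<in> lspan S\<close> show "p \<in> T" using ST
  proof (induction rule: lspan.induct)
    case zero then show ?case by (metis nczero_eq subsp_0)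
  next
    case (add p q) then show ?case unfolding ncadd_eq by (intro subsp_add)
  next
    case (smul p a) then show ?case by (intro subsp_smul)
  qed auto
qed
lemma lspan_mono: "S \<subseteq> T \<Longrightarrow> lspan S \<subseteq> lspan T"
  using lspan_least[of S "lspan T"] lspan.base subsp_lspan by blast

lemma freeLie_br: "p \<in> freeLie n \<Longrightarrow> q \<in> freeLie n \<Longrightarrow> lbr p q \<in> freeLie n"
  by (rule freeLie.br)
lemma freeLie_var: "i < n \<Longrightarrow> ncvar i \<in> freeLie n" by (rule freeLie.var)

lemma subsp_brset: "subsp (brset A B)" by (simp add: brset_def subsp_lspan)
lemma brset_base: "a \<in> A \<Longrightarrow> b \<in> B \<Longrightarrow> lbr a b \<in> brset A B"
  unfolding brset_def by (rule lspan.base) blast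

lemma lspan_lbr_left:
  assumes "p \<in> lspan S" "subsp T" "\<And>s. s \<in> S \<Longrightarrow> lbr s x \<in> T"
  shows "lbr p x \<in> T"
  using assms(1)
proof (induction rule: lspan.induct)
  case zero then show ?case using assms by (metis nczero_eq subsp_0 lbr_zero_left)
next
  case (base p) then show ?case using assms by simp
next
  case (add p q) then show ?case unfolding ncadd_eq lbr_add_left by (intro subsp_add[OF assms(2)])
next
  case (smul p a) then show ?case unfolding lbr_smul_left by (intro subsp_smul[OF assms(2)])
qed

lemma brset_lbr_left:
  assumes "p \<in> brset A B" "subsp T" "\<And>a b. a \<in> A \<Longrightarrow> b \<in> B \<Longrightarrow> lbr (lbr a b) x \<in> T"
  shows "lbr p x \<in> T"
  using assms unfolding brset_def by (intro lspan_lbr_left[of p _ T]) auto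

lemma brset_subset: "(\<And>a b. a \<in> A \<Longrightarrow> b \<in> B \<Longrightarrow> lbr a b \<in> T) \<Longrightarrow> subsp T \<Longrightarrow> brset A B \<subseteq> T"
  unfolding brset_def by (rule lspan_least) auto

lemma brset_mono: "A \<subseteq> A' \<Longrightarrow> B \<subseteq> B' \<Longrightarrow> brset A B \<subseteq> brset A' B'"
  unfolding brset_def by (rule lspan_mono) blast

lemma lcs_freeLie: "lcs n k \<subseteq> freeLie n"
proof (induction k)
  case 0 then show ?case by simp
next
  case (Suc k) then show ?case
    using brset_subset[OF _ subsp_freeLie, of "lcs n k" "freeLie n" n] freeLie.br by auto
qed

lemma subsp_lcs: "subsp (lcs n k)"
  by (cases k) (simp_all add: subsp_freeLie subsp_brset)

lemma lcs_Suc_subset: "(lcs n (Suc k) :: 'k::field ncpoly set) \<subseteq> lcs n k"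
proof (induction k)
  case 0 then show ?case using lcs_freeLie[of n "Suc 0"] by simp
next
  case (Suc k)
  have "brset (lcs n (Suc k)) (freeLie n) \<subseteq> brset (lcs n k :: 'k ncpoly set) (freeLie n)"
    by (rule brset_mono[OF Suc.IH order_refl])
  then show ?case by (simp only: lcs.simps(2))
qed

lemma lcs_mono: "k \<le> m \<Longrightarrow> lcs n m \<subseteq> lcs n k"
proof (induction m rule: dec_induct)
  case base then show ?case by simp
next
  case (step m) then show ?case using lcs_Suc_subset[of n m] by blast
qed

lemma lcs_br: "p \<in> lcs n k \<Longrightarrow> x \<in> freeLie n \<Longrightarrow> lbr p x \<in> lcs n (Suc k)"
  by (simp add: brset_base)
lemma lcs_br': "x \<in> freeLie n \<Longrightarrow> p \<in> lcs n k \<Longrightarrow> lbr x p \<in> lcs n (Suc k)"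
  using lcs_br[of p n k x] subsp_uminus[OF subsp_lcs] by (subst lbr_antisym) blast

lemma lcs1_br:
  fixes p q :: "'k::field ncpoly"
  assumes "p \<in> lcs n 1" "q \<in> lcs n m"
  shows "lbr p q \<in> lcs n (m + 2)"
proof -
  have "(lcs n 1 :: 'k ncpoly set) = brset (freeLie n) (freeLie n)" by simp
  then have p: "p \<in> brset (freeLie n) (freeLie n)" using assms by simp
  show ?thesis
  proof (rule brset_lbr_left[OF p subsp_lcs])
    fix a b :: "'k ncpoly" assume a: "a \<in> freeLie n" and b: "b \<in> freeLie n"
    have q: "q \<in> freeLie n" using assms lcs_freeLie by blast
    have 1: "lbr (lbr a q) b \<in> lcs n (m+2)"
      using lcs_br[OF lcs_br'[OF a assms(2)] b] by simp
    have 2: "lbr a (lbr b q) \<in> lcs n (m+2)"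
      using lcs_br'[OF a lcs_br'[OF b assms(2)]] by simp
    show "lbr (lbr a b) q \<in> lcs n (m+2)"
      using jacobi[of a b q] subsp_add[OF subsp_lcs 1 2] by simp
  qed
qed

lemma lcs1_br':
  assumes "p \<in> lcs n 1" "q \<in> lcs n m"
  shows "lbr q p \<in> lcs n (m + 2)"
  using lcs1_br[OF assms] subsp_uminus[OF subsp_lcs] by (subst lbr_antisym) blast

lemma freeLie_nil: "p \<in> freeLie n \<Longrightarrow> p [] = 0"
  by (induction rule: freeLie.induct)
     (auto simp: nczero_def ncvar_def ncadd_def ncsmul_def lbr_def ncsub_def ncmul_def)

lemma lcs_support: "(p::'k::field ncpoly) \<in> lcs n k \<Longrightarrow> length w \<le> k \<Longrightarrow> p w = 0"
proof (induction k arbitrary: p w)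
  case 0
  then have "p \<in> freeLie n" by simp
  then show ?case using 0 freeLie_nil by auto
next
  case (Suc k)
  let ?T = "{p::'k ncpoly. \<forall>w. length w \<le> Suc k \<longrightarrow> p w = 0}"
  have T: "subsp ?T" by (auto simp: subsp_def)
  have "brset (lcs n k) (freeLie n) \<subseteq> ?T"
  proof (rule brset_subset[OF _ T])
    fix a b :: "'k ncpoly" assume a: "a \<in> lcs n k" and b: "b \<in> freeLie n"
    have b0: "b [] = 0" using b freeLie_nil by auto
    have b0': "\<And>w. length w \<le> 0 \<Longrightarrow> b w = 0" using b0 by simp
    have aw: "\<And>w. length w \<le> k \<Longrightarrow> a w = 0" using Suc.IH a by blast
    have a0: "a [] = 0" using aw by simp
    show "lbr a b \<in> ?T"
    proof (clarify)
      fix w :: "nat list" assume w: "length w \<le> Suc k"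
      have "ncmul a b w = 0"
        unfolding ncmul_def
      proof (intro sum.neutral ballI)
        fix i assume "i \<in> {..length w}"
        then show "a (take i w) * b (drop i w) = 0"
          using w aw[of "take i w"] b0 by (cases "i = length w") auto
      qed
      moreover have "ncmul b a w = 0"
        unfolding ncmul_def
      proof (intro sum.neutral ballI)
        fix i assume "i \<in> {..length w}"
        then show "b (take i w) * a (drop i w) = 0"
          using w aw[of "drop i w"] b0 by (cases "i = 0") auto
      qed
      ultimately show "lbr a b w = 0" by (simp add: lbr_eq)
    qed
  qed
  then show ?case using Suc.prems by auto
qed


lemma gammaL_eq: "gammaL n k = lcs n (k - 1)" by (simp add: gammaL_def)
lemma derived2_eq: "derived2 n = brset (lcs n 1) (lcs n 1)"
  by (simp add: derived2_def gammaL_def)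

lemma subsp_derived2: "subsp (derived2 n)" by (simp add: derived2_def subsp_brset)

lemma derived2_lcs3: "(derived2 n :: 'k::field ncpoly set) \<subseteq> lcs n 3"
  unfolding derived2_eq
proof (rule brset_subset[OF _ subsp_lcs])
  fix a b :: "'k ncpoly" assume "a \<in> lcs n 1" "b \<in> lcs n 1"
  then show "lbr a b \<in> lcs n 3" using lcs1_br[of a n b 1] by (simp add: numeral_3_eq_3)
qed

lemma derived2_freeLie: "(derived2 n :: 'k::field ncpoly set) \<subseteq> freeLie n"
  using derived2_lcs3 lcs_freeLie by blast

lemma derived2_ideal:
  fixes d x :: "'k::field ncpoly"
  assumes "d \<in> derived2 n" "x \<in> freeLie n"
  shows "lbr d x \<in> derived2 n"
proof (rule brset_lbr_left[OF assms(1)[unfolded derived2_eq] subsp_derived2])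
  fix a b :: "'k ncpoly" assume a: "a \<in> lcs n 1" and b: "b \<in> lcs n 1"
  have "lbr a x \<in> lcs n 1" using lcs_br[OF a assms(2)] lcs_Suc_subset[of n 1] by auto
  then have 1: "lbr (lbr a x) b \<in> derived2 n" using b unfolding derived2_eq by (rule brset_base)
  have "lbr b x \<in> lcs n 1" using lcs_br[OF b assms(2)] lcs_Suc_subset[of n 1] by auto
  then have 2: "lbr a (lbr b x) \<in> derived2 n" using a unfolding derived2_eq by (intro brset_base)
  show "lbr (lbr a b) x \<in> derived2 n"
    unfolding jacobi[of a b x] by (rule subsp_add[OF subsp_derived2 1 2])
qed

lemma idealI_eq: "(idealI n c :: 'k::field ncpoly set) = {a + b |a b. a \<in> derived2 n \<and> b \<in> (lcs n c :: 'k ncpoly set)}"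
  by (simp add: idealI_def gammaL_def ncadd_eq)

lemma subsp_idealI: "subsp (idealI n c :: 'k::field ncpoly set)"
proof -
  have D: "subsp (derived2 n :: 'k ncpoly set)" and G: "subsp (lcs n c :: 'k ncpoly set)" by (rule subsp_derived2, rule subsp_lcs)
  show ?thesis unfolding subsp_def idealI_eq
  proof (intro conjI ballI allI)
    have "(0::'k ncpoly) = 0 + 0" by simp
    then show "0 \<in> {a + b |a b. a \<in> derived2 n \<and> b \<in> (lcs n c :: 'k ncpoly set)}"
      using subsp_0[OF D] subsp_0[OF G] by blast
  next
    fix p q assume "p \<in> {a + b |a b. a \<in> derived2 n \<and> b \<in> (lcs n c :: 'k ncpoly set)}" "q \<in> {a + b |a b. a \<in> derived2 n \<and> b \<in> (lcs n c :: 'k ncpoly set)}"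
    then obtain a b a' b' where "p = a + b" "q = a' + b'" "a \<in> derived2 n" "b \<in> lcs n c" "a' \<in> derived2 n" "b' \<in> lcs n c"
      by blast
    then show "p + q \<in> {a + b |a b. a \<in> derived2 n \<and> b \<in> (lcs n c :: 'k ncpoly set)}"
    proof -
      have "p + q = (a + a') + (b + b')" using \<open>p = a + b\<close> \<open>q = a' + b'\<close> by (simp add: algebra_simps)
      then show ?thesis using subsp_add[OF D, of a a'] subsp_add[OF G, of b b'] \<open>a \<in> derived2 n\<close> \<open>b \<in> lcs n c\<close> \<open>a' \<in> derived2 n\<close> \<open>b' \<in> lcs n c\<close> by blast
    qed
  next
    fix p x assume "p \<in> {a + b |a b. a \<in> derived2 n \<and> b \<in> (lcs n c :: 'k ncpoly set)}"
    then obtain a b where "p = a + b" "a \<in> derived2 n" "b \<in> lcs n c" by blast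
    then show "ncsmul x p \<in> {a + b |a b. a \<in> derived2 n \<and> b \<in> (lcs n c :: 'k ncpoly set)}"
      using subsp_smul[OF D, of a x] subsp_smul[OF G, of b x] by (auto simp: ncsmul_add)
  qed
qed

lemma derived2_I: "(x::'k::field ncpoly) \<in> derived2 n \<Longrightarrow> x \<in> idealI n c"
proof -
  assume "x \<in> derived2 n"
  moreover have "x = x + 0" by simp
  ultimately show ?thesis unfolding idealI_eq using subsp_0[OF subsp_lcs, of n c] by blast
qed
lemma lcs_I: "(x::'k::field ncpoly) \<in> lcs n c \<Longrightarrow> x \<in> idealI n c"
proof -
  assume "x \<in> lcs n c"
  moreover have "x = 0 + x" by simp
  ultimately show ?thesis unfolding idealI_eq using subsp_0[OF subsp_derived2, of n] by blast
qed

lemma idealI_freeLie: "(idealI n c :: 'k::field ncpoly set) \<subseteq> freeLie n"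
  unfolding idealI_eq using derived2_freeLie lcs_freeLie subsp_add[OF subsp_freeLie] by blast

lemma idealI_lcs: "k \<le> 3 \<Longrightarrow> k \<le> c \<Longrightarrow> (idealI n c :: 'k::field ncpoly set) \<subseteq> lcs n k"
  unfolding idealI_eq using derived2_lcs3 lcs_mono[of k 3 n] lcs_mono[of k c n] subsp_add[OF subsp_lcs]
  by blast

lemma idealI_br:
  fixes i x :: "'k::field ncpoly"
  assumes "i \<in> idealI n c" "x \<in> freeLie n"
  shows "lbr i x \<in> idealI n c"
proof -
  obtain a b where ab: "i = a + b" "a \<in> derived2 n" "b \<in> lcs n c"
    using assms(1) unfolding idealI_eq by blast
  have "lbr b x \<in> lcs n c" using lcs_br[OF ab(3) assms(2)] lcs_Suc_subset by blast
  then show ?thesis unfolding ab lbr_add_left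
    using derived2_ideal[OF ab(2) assms(2)] derived2_I lcs_I subsp_add[OF subsp_idealI] by blast
qed

lemma idealI_br':
  fixes i x :: "'k::field ncpoly"
  assumes "i \<in> idealI n c" "x \<in> freeLie n"
  shows "lbr x i \<in> idealI n c"
  using subsp_uminus[OF subsp_idealI idealI_br[OF assms]] by (subst lbr_antisym) simp


lemma perm_act_add: "perm_act \<pi> (p + q) = perm_act \<pi> p + perm_act \<pi> q"
  by (simp add: perm_act_def fun_eq_iff)
lemma perm_act_diff: "perm_act \<pi> (p - q) = perm_act \<pi> p - perm_act \<pi> q"
  by (simp add: perm_act_def fun_eq_iff)
lemma perm_act_zero[simp]: "perm_act \<pi> 0 = 0"
  by (simp add: perm_act_def fun_eq_iff)
lemma perm_act_smul: "perm_act \<pi> (ncsmul a p) = ncsmul a (perm_act \<pi> p)"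
  by (simp add: perm_act_def fun_eq_iff)
lemma perm_act_sum: "perm_act \<pi> (\<Sum>i\<in>A. f i) = (\<Sum>i\<in>A. perm_act \<pi> (f i))"
  by (induction A rule: infinite_finite_induct) (simp_all only: sum.infinite sum.empty sum.insert not_False_eq_True perm_act_zero perm_act_add)
lemma perm_act_mul: "perm_act \<pi> (ncmul p q) = ncmul (perm_act \<pi> p) (perm_act \<pi> q)"
  by (simp add: perm_act_def ncmul_def fun_eq_iff take_map drop_map)
lemma perm_act_lbr: "perm_act \<pi> (lbr p q) = lbr (perm_act \<pi> p) (perm_act \<pi> q)"
  by (simp add: lbr_eq perm_act_diff perm_act_mul)
lemma perm_act_var: 
  assumes "bij \<pi>" shows "perm_act \<pi> (ncvar i) = ncvar (\<pi> i)"
proof (rule ext)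
  fix w :: "nat list"
  have "map (inv \<pi>) w = [i] \<longleftrightarrow> w = [\<pi> i]"
  proof (cases w)
    case Nil then show ?thesis by simp
  next
    case (Cons x xs)
    have "inv \<pi> x = i \<longleftrightarrow> x = \<pi> i" by (metis assms bij_inv_eq_iff)
    then show ?thesis using Cons by auto
  qed
  then show "perm_act \<pi> (ncvar i) w = ncvar (\<pi> i) w"
    by (simp add: perm_act_def ncvar_def)
qed
lemma perm_act_comp: 
  assumes "bij \<pi>" "bij \<sigma>" shows "perm_act \<sigma> (perm_act \<pi> p) = perm_act (\<sigma> \<circ> \<pi>) p"
proof -
  have "inv (\<sigma> \<circ> \<pi>) = inv \<pi> \<circ> inv \<sigma>" by (rule o_inv_distrib[OF assms(2,1)])
  then show ?thesis unfolding perm_act_def by (simp only: map_map)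
qed
lemma perm_act_id: "perm_act id p = p"
  by (simp add: perm_act_def fun_eq_iff)

lemma perm_freeLie:
  assumes "\<pi> permutes {..<n}" "p \<in> freeLie n"
  shows "perm_act \<pi> p \<in> freeLie n"
  using assms(2)
proof (induction rule: freeLie.induct)
  case zero show ?case unfolding nczero_eq perm_act_zero by (rule subsp_0[OF subsp_freeLie])
next
  case (var i)
  have "\<pi> i < n" using assms(1) var permutes_in_image by fastforce
  then show ?case using perm_act_var[OF permutes_bij[OF assms(1)]] freeLie.var by metis
next
  case (add p q) then show ?case unfolding ncadd_eq perm_act_add by (intro subsp_add[OF subsp_freeLie])
next
  case (smul p a) then show ?case unfolding perm_act_smul by (intro subsp_smul[OF subsp_freeLie])
next
  case (br p q) then show ?case unfolding perm_act_lbr by (intro freeLie.br)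
qed

lemma perm_lspan:
  assumes "p \<in> lspan S" "subsp T" "\<And>s. s \<in> S \<Longrightarrow> perm_act \<pi> s \<in> T"
  shows "perm_act \<pi> p \<in> T"
  using assms(1)
proof (induction rule: lspan.induct)
  case zero show ?case unfolding nczero_eq perm_act_zero by (rule subsp_0[OF assms(2)])
next
  case (base p) then show ?case using assms by simp
next
  case (add p q) then show ?case unfolding ncadd_eq perm_act_add by (intro subsp_add[OF assms(2)])
next
  case (smul p a) then show ?case unfolding perm_act_smul by (intro subsp_smul[OF assms(2)])
qed

lemma perm_lcs:
  fixes p :: "'k::field ncpoly"
  assumes "\<pi> permutes {..<n}"
  shows "p \<in> lcs n k \<Longrightarrow> perm_act \<pi> p \<in> lcs n k"
proof (induction k arbitrary: p)
  case 0 then show ?case using perm_freeLie[OF assms] by simp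
next
  case (Suc k)
  have "p \<in> lspan {lbr a b |a b. a \<in> lcs n k \<and> b \<in> freeLie n}" using Suc.prems by (simp add: brset_def)
  then show ?case
  proof (rule perm_lspan)
    show "subsp (lcs n (Suc k))" by (rule subsp_lcs)
  next
    fix s :: "'k ncpoly" assume "s \<in> {lbr a b |a b. a \<in> lcs n k \<and> b \<in> freeLie n}"
    then obtain a b where s: "s = lbr a b" and a: "a \<in> lcs n k" and b: "b \<in> freeLie n" by blast
    have "lbr (perm_act \<pi> a) (perm_act \<pi> b) \<in> lcs n (Suc k)"
      by (rule lcs_br[OF Suc.IH[OF a] perm_freeLie[OF assms b]])
    then show "perm_act \<pi> s \<in> lcs n (Suc k)" unfolding s perm_act_lbr .
  qed
qed

lemma perm_derived2:
  fixes p :: "'k::field ncpoly"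
  assumes "\<pi> permutes {..<n}" "p \<in> derived2 n"
  shows "perm_act \<pi> p \<in> derived2 n"
  using assms(2) unfolding derived2_eq brset_def
proof (rule perm_lspan)
  show "subsp (lspan {lbr a b |a b. a \<in> lcs n 1 \<and> b \<in> lcs n 1})" by (rule subsp_lspan)
next
  fix s :: "'k ncpoly" assume "s \<in> {lbr a b |a b. a \<in> lcs n 1 \<and> b \<in> lcs n 1}"
  then obtain a b where s: "s = lbr a b" and a: "a \<in> lcs n 1" and b: "b \<in> lcs n 1" by blast
  have "lbr (perm_act \<pi> a) (perm_act \<pi> b) \<in> {lbr a b |a b. a \<in> lcs n 1 \<and> b \<in> lcs n 1}"
    using perm_lcs[OF assms(1) a] perm_lcs[OF assms(1) b] by blast
  then show "perm_act \<pi> s \<in> lspan {lbr a b |a b. a \<in> lcs n 1 \<and> b \<in> lcs n 1}"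
    unfolding s perm_act_lbr by (rule lspan.base)
qed

lemma perm_idealI:
  assumes "\<pi> permutes {..<n}" "p \<in> idealI n c"
  shows "perm_act \<pi> p \<in> idealI n c"
proof -
  obtain a b where ab: "p = a + b" "a \<in> derived2 n" "b \<in> lcs n c"
    using assms(2) unfolding idealI_eq by blast
  then show ?thesis unfolding ab perm_act_add idealI_eq
    using perm_derived2[OF assms(1) ab(2)] perm_lcs[OF assms(1) ab(3)] by blast
qed


lemma relI_iff: "(p, q) \<in> relI n c \<longleftrightarrow> p \<in> freeLie n \<and> q \<in> freeLie n \<and> p - q \<in> idealI n c"
  by (simp add: relI_def ncsub_eq)

lemma equiv_relI: "equiv (freeLie n) (relI n c)"
proof (rule equivI)
  show "refl_on (freeLie n) (relI n c)"
    by (auto simp: refl_on_def relI_iff subsp_0[OF subsp_idealI] intro: lcs_freeLie[THEN subsetD])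
  show "sym (relI n c)"
    by (auto simp: sym_def relI_iff intro: subsp_diff_sym[OF subsp_idealI])
  show "relI n c \<subseteq> freeLie n \<times> freeLie n" by (auto simp: relI_iff)
  show "trans (relI n c)"
    by (auto simp: trans_def relI_iff intro: subsp_diff_trans[OF subsp_idealI])
qed

lemma cls_mem_iff: "q \<in> cls n c p \<longleftrightarrow> p \<in> freeLie n \<and> q \<in> freeLie n \<and> p - q \<in> idealI n c"
  by (simp add: cls_def relI_iff)

lemma cls_in_Lnc: "p \<in> freeLie n \<Longrightarrow> cls n c p \<in> Lnc n c"
  by (simp add: Lnc_def cls_def quotientI)

lemma Lnc_E: "C \<in> Lnc n c \<Longrightarrow> (\<And>p. p \<in> freeLie n \<Longrightarrow> C = cls n c p \<Longrightarrow> P) \<Longrightarrow> P"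
  by (auto simp: Lnc_def cls_def elim!: quotientE)

lemma cls_self: "p \<in> freeLie n \<Longrightarrow> p \<in> cls n c p"
  unfolding cls_def by (rule equiv_class_self[OF equiv_relI])

lemma cls_eq_iff: 
  assumes "p \<in> freeLie n" "q \<in> freeLie n" shows "cls n c p = cls n c q \<longleftrightarrow> p - q \<in> idealI n c"
proof -
  have "cls n c p = cls n c q \<longleftrightarrow> (p, q) \<in> relI n c" 
    unfolding cls_def by (rule eq_equiv_class_iff[OF equiv_relI assms])
  then show ?thesis using assms by (simp add: relI_iff)
qed

lemma cls_eqI: "q \<in> cls n c p \<Longrightarrow> cls n c q = cls n c p"
  using cls_eq_iff[of q n p c] cls_mem_iff[of q n c p] subsp_diff_sym[OF subsp_idealI] by blast

lemma Lnc_some: "C \<in> Lnc n c \<Longrightarrow> (SOME p. p \<in> C) \<in> C"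
  by (erule Lnc_E) (metis cls_self someI_ex)

lemma Lnc_some_cls: "C \<in> Lnc n c \<Longrightarrow> C = cls n c (SOME p. p \<in> C)"
  by (metis Lnc_E Lnc_some cls_eqI)

lemma Lnc_subset: "C \<in> Lnc n c \<Longrightarrow> C \<subseteq> freeLie n"
  by (erule Lnc_E) (auto simp: cls_mem_iff)

lemma sym_cls_iff:
  assumes p: "p \<in> freeLie n"
  shows "cls n c p \<in> symLnc n c \<longleftrightarrow> (\<forall>\<pi>. \<pi> permutes {..<n} \<longrightarrow> perm_act \<pi> p - p \<in> idealI n c)"
proof
  assume "cls n c p \<in> symLnc n c"
  then have "\<forall>\<pi>. \<pi> permutes {..<n} \<longrightarrow> cls n c (perm_act \<pi> p) = cls n c p"
    using cls_self[OF p] by (auto simp: symLnc_def)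
  then show "\<forall>\<pi>. \<pi> permutes {..<n} \<longrightarrow> perm_act \<pi> p - p \<in> idealI n c"
    using cls_eq_iff[OF perm_freeLie p] p by blast
next
  assume H: "\<forall>\<pi>. \<pi> permutes {..<n} \<longrightarrow> perm_act \<pi> p - p \<in> idealI n c"
  show "cls n c p \<in> symLnc n c"
    unfolding symLnc_def
  proof (intro CollectI conjI allI impI ballI)
    show "cls n c p \<in> Lnc n c" by (rule cls_in_Lnc[OF p])
  next
    fix \<pi> q assume pi: "\<pi> permutes {..<n}" and q: "q \<in> cls n c p"
    then have qL: "q \<in> freeLie n" and pq: "p - q \<in> idealI n c" by (auto simp: cls_mem_iff)
    have "perm_act \<pi> q - p = (perm_act \<pi> p - p) - perm_act \<pi> (p - q)"
      by (simp add: perm_act_diff)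
    also have "\<dots> \<in> idealI n c"
      using H pi perm_idealI[OF pi pq] subsp_diff[OF subsp_idealI] by blast
    finally show "cls n c (perm_act \<pi> q) = cls n c p"
      using cls_eq_iff[OF perm_freeLie[OF pi qL] p] by blast
  qed
qed


lemma sum_fun_apply: "(\<Sum>i\<in>A. f i) w = (\<Sum>i\<in>A. f i w)"
  by (induction A rule: infinite_finite_induct) simp_all

lemma eps_rep_eq: "eps_rep c u v = (\<Sum>k<c. ncsmul (1 / of_nat (fact k)) ((ad u ^^ k) v))"
  by (simp add: eps_rep_def fun_eq_iff sum_fun_apply)

lemma ad_pow_Suc: "(ad u ^^ Suc k) v = lbr ((ad u ^^ k) v) u"
  by (simp add: ad_def)

lemma ad_pow_lcs:
  assumes "u \<in> freeLie n" "v \<in> lcs n m"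
  shows "(ad u ^^ k) v \<in> lcs n (m + k)"
proof (induction k)
  case 0 then show ?case using assms by simp
next
  case (Suc k) then show ?case unfolding ad_pow_Suc using lcs_br[OF Suc.IH assms(1)] by simp
qed

lemma ad_pow_freeLie:
  assumes "u \<in> freeLie n" "v \<in> freeLie n"
  shows "(ad u ^^ k) v \<in> freeLie n"
  using ad_pow_lcs[of u n v 0 k] assms lcs_freeLie by auto

lemma eps_rep_freeLie:
  assumes "u \<in> freeLie n" "v \<in> freeLie n"
  shows "eps_rep c u v \<in> freeLie n"
  unfolding eps_rep_eq
  by (intro subsp_sum[OF subsp_freeLie] subsp_smul[OF subsp_freeLie] ad_pow_freeLie assms)

lemma eps_rep_zero: "c \<ge> 1 \<Longrightarrow> eps_rep c 0 v = v"
proof -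
  assume c: "c \<ge> 1"
  have "(\<Sum>k<c. ncsmul (1 / of_nat (fact k)) ((ad 0 ^^ k) v)) = (\<Sum>k\<in>{0}. ncsmul (1 / of_nat (fact k)) ((ad 0 ^^ k) v))"
  proof (rule sum.mono_neutral_right)
    show "\<forall>i\<in>{..<c} - {0}. ncsmul (1 / of_nat (fact i)) ((ad 0 ^^ i) v) = 0"
    proof
      fix i assume "i \<in> {..<c} - {0}"
      then obtain j where "i = Suc j" by (cases i) auto
      then show "ncsmul (1 / of_nat (fact i)) ((ad 0 ^^ i) v) = 0" by (simp only: ad_pow_Suc lbr_zero_right ncsmul_zero)
    qed
  qed (use c in auto)
  then show ?thesis unfolding eps_rep_eq by simp
qed

lemma perm_ad_pow: "perm_act \<pi> ((ad u ^^ k) v) = (ad (perm_act \<pi> u) ^^ k) (perm_act \<pi> v)"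
  by (induction k) (simp_all add: ad_pow_Suc perm_act_lbr del: funpow.simps)

lemma perm_eps: "perm_act \<pi> (eps_rep c u v) = eps_rep c (perm_act \<pi> u) (perm_act \<pi> v)"
  unfolding eps_rep_eq perm_act_sum perm_act_smul perm_ad_pow ..

lemma ad_pow_diff: "(ad u ^^ k) v - (ad u ^^ k) v' = (ad u ^^ k) (v - v')"
proof (induction k)
  case 0 show ?case by simp
next
  case (Suc k) show ?case unfolding ad_pow_Suc Suc.IH[symmetric] lbr_diff_left ..
qed

lemma eps_rep_diff:
  "eps_rep c u v - eps_rep c u' v' = (\<Sum>k<c. ncsmul (1 / of_nat (fact k)) ((ad u ^^ k) v - (ad u' ^^ k) v'))"
  unfolding eps_rep_eq by (simp add: sum_subtractf ncsmul_diff)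

lemma eps_rep_cong_v:
  assumes "u \<in> freeLie n" "v - v' \<in> idealI n c"
  shows "eps_rep c u v - eps_rep c u v' \<in> idealI n c"
  unfolding eps_rep_diff
proof (intro subsp_sum[OF subsp_idealI] subsp_smul[OF subsp_idealI])
  fix k
  show "(ad u ^^ k) v - (ad u ^^ k) v' \<in> idealI n c"
    unfolding ad_pow_diff
  proof (induction k)
    case 0 show ?case using assms(2) by (simp only: funpow_0 id_apply)
  next
    case (Suc k) then show ?case unfolding ad_pow_Suc by (rule idealI_br[OF _ assms(1)])
  qed
qed

lemma ad_pow_cong_u:
  fixes u u' v g :: "'k::field ncpoly"
  assumes "c \<ge> 1" "u \<in> freeLie n" "u' \<in> freeLie n" "v \<in> freeLie n"
    "g \<in> lcs n (c - 1)" "u - u' - g \<in> idealI n c"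
  shows "(ad u ^^ k) v - (ad u' ^^ k) v \<in> idealI n c"
proof (induction k)
  case 0 show ?case unfolding funpow_0 id_apply diff_self by (rule subsp_0[OF subsp_idealI])
next
  case (Suc k)
  let ?A = "(ad u ^^ k) v" and ?A' = "(ad u' ^^ k) v"
  have A': "?A' \<in> freeLie n" by (rule ad_pow_freeLie[OF assms(3,4)])
  have eq: "(ad u ^^ Suc k) v - (ad u' ^^ Suc k) v
      = lbr (?A - ?A') u + (lbr ?A' (u - u' - g) + lbr ?A' g)"
    unfolding ad_pow_Suc lbr_diff_left lbr_diff_right by (simp add: algebra_simps)
  have 1: "lbr (?A - ?A') u \<in> idealI n c" by (rule idealI_br[OF Suc.IH assms(2)])
  have 2: "lbr ?A' (u - u' - g) \<in> idealI n c" by (rule idealI_br'[OF assms(6) A'])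
  have "lbr ?A' g \<in> lcs n (Suc (c - 1))" by (rule lcs_br'[OF A' assms(5)])
  then have 3: "lbr ?A' g \<in> idealI n c" using assms(1) lcs_I by (simp add: Suc_pred)
  show ?case unfolding eq by (intro subsp_add[OF subsp_idealI] 1 2 3)
qed

lemma eps_rep_cong_u:
  fixes u u' v g :: "'k::field ncpoly"
  assumes "c \<ge> 1" "u \<in> freeLie n" "u' \<in> freeLie n" "v \<in> freeLie n"
    "g \<in> lcs n (c - 1)" "u - u' - g \<in> idealI n c"
  shows "eps_rep c u v - eps_rep c u' v \<in> idealI n c"
  unfolding eps_rep_diff
  by (intro subsp_sum[OF subsp_idealI] subsp_smul[OF subsp_idealI] ad_pow_cong_u[OF assms])

lemma eps_rep_cong_u':
  fixes u u' v :: "'k::field ncpoly"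
  assumes "c \<ge> 1" "u \<in> freeLie n" "u' \<in> freeLie n" "v \<in> freeLie n" "u - u' \<in> idealI n c"
  shows "eps_rep c u v - eps_rep c u' v \<in> idealI n c"
  using eps_rep_cong_u[OF assms(1-4) subsp_0[OF subsp_lcs]] assms(5) by simp

lemma epsL_eq:
  fixes u p :: "'k::field ncpoly"
  assumes c: "c \<ge> 1" and U: "U \<in> Lnc n c" and C: "C \<in> Lnc n c" and u: "u \<in> U" and p: "p \<in> C"
  shows "epsL n c U C = cls n c (eps_rep c u p)"
proof -
  define u' where "u' = (SOME u. u \<in> U)"
  define p' where "p' = (SOME p. p \<in> C)"
  have u': "u' \<in> U" and p': "p' \<in> C" unfolding u'_def p'_def by (rule Lnc_some[OF U], rule Lnc_some[OF C])
  have uL: "u \<in> freeLie n" "u' \<in> freeLie n" using u u' Lnc_subset[OF U] by auto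
  have pL: "p \<in> freeLie n" "p' \<in> freeLie n" using p p' Lnc_subset[OF C] by auto
  have "cls n c u' = cls n c u" using Lnc_some_cls[OF U] cls_eqI u u' unfolding u'_def by metis
  then have uu: "u' - u \<in> idealI n c" using cls_eq_iff[OF uL(2) uL(1)] by blast
  have "cls n c p' = cls n c p" using Lnc_some_cls[OF C] cls_eqI p p' unfolding p'_def by metis
  then have pp: "p' - p \<in> idealI n c" using cls_eq_iff[OF pL(2) pL(1)] by blast
  have "eps_rep c u' p' - eps_rep c u p = (eps_rep c u' p' - eps_rep c u' p) + (eps_rep c u' p - eps_rep c u p)"
    by simp
  also have "\<dots> \<in> idealI n c"
    by (intro subsp_add[OF subsp_idealI] eps_rep_cong_v[OF uL(2) pp] eps_rep_cong_u'[OF c uL(2) uL(1) pL(1) uu])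
  finally have "cls n c (eps_rep c u' p') = cls n c (eps_rep c u p)"
    using cls_eq_iff eps_rep_freeLie uL pL by blast
  then show ?thesis unfolding epsL_def using C u'_def p'_def by simp
qed

lemma epsL_in_Lnc:
  assumes c: "c \<ge> 1" and U: "U \<in> Lnc n c" and C: "C \<in> Lnc n c"
  shows "epsL n c U C \<in> Lnc n c"
proof -
  have "epsL n c U C = cls n c (eps_rep c (SOME u. u \<in> U) (SOME p. p \<in> C))"
    by (rule epsL_eq[OF c U C Lnc_some[OF U] Lnc_some[OF C]])
  then show ?thesis using eps_rep_freeLie cls_in_Lnc Lnc_some Lnc_subset U C by (metis subsetD)
qed


definition Cf :: "'k::field ncpoly \<Rightarrow> nat multiset \<Rightarrow> 'k" where
  "Cf p R = (\<Sum>v\<in>permutations_of_multiset R. p v)"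

definition Phi :: "'k::field ncpoly \<Rightarrow> nat \<Rightarrow> nat multiset \<Rightarrow> 'k" where
  "Phi p e R = (\<Sum>v\<in>permutations_of_multiset R. p (v @ [e]))"

definition PR :: "nat multiset \<Rightarrow> (nat list \<times> nat list) set" where
  "PR R = {(v1, v2). mset v1 + mset v2 = R}"

definition VR :: "nat multiset \<Rightarrow> nat list set" where
  "VR R = {v. mset v \<subseteq># R}"

lemma pom_iff: "v \<in> permutations_of_multiset R \<longleftrightarrow> mset v = R"
  by (simp add: permutations_of_multiset_def)

lemma finite_VR: "finite (VR R)"
proof -
  have "VR R \<subseteq> {v. set v \<subseteq> set_mset R \<and> length v \<le> size R}"
    unfolding VR_def
    by (auto dest: mset_subset_eqD size_mset_mono simp: size_mset[symmetric] simp del: size_mset)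
  moreover have "finite {v. set v \<subseteq> set_mset R \<and> length v \<le> size R}"
    by (rule finite_lists_length_le) simp
  ultimately show ?thesis by (rule finite_subset)
qed

lemma sum_pairs:
  "(\<Sum>v\<in>permutations_of_multiset R. \<Sum>i\<le>length v. f (take i v) (drop i v))
   = (\<Sum>(v1,v2)\<in>PR R. f v1 v2)"
proof -
  have "(\<Sum>v\<in>permutations_of_multiset R. \<Sum>i\<le>length v. f (take i v) (drop i v))
     = (\<Sum>(v,i)\<in>(SIGMA v:permutations_of_multiset R. {..length v}). f (take i v) (drop i v))"
    by (rule sum.Sigma) auto
  also have "\<dots> = (\<Sum>(v1,v2)\<in>PR R. f v1 v2)"
  proof (rule sum.reindex_bij_witness[where i = "\<lambda>(v1,v2). (v1 @ v2, length v1)"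
        and j = "\<lambda>(v,i). (take i v, drop i v)"])
    fix a assume "a \<in> (SIGMA v:permutations_of_multiset R. {..length v})"
    then obtain v i where a: "a = (v, i)" "mset v = R" "i \<le> length v" by (auto simp: pom_iff)
    show "(case case a of (v, i) \<Rightarrow> (take i v, drop i v) of (v1, v2) \<Rightarrow> (v1 @ v2, length v1)) = a"
      using a by (simp add: min_def)
    show "(case a of (v, i) \<Rightarrow> (take i v, drop i v)) \<in> PR R"
      using a by (simp add: PR_def mset_append[symmetric] del: mset_append)
    show "(case case a of (v, i) \<Rightarrow> (take i v, drop i v) of (v1, v2) \<Rightarrow> f v1 v2) =
          (case a of (v, i) \<Rightarrow> f (take i v) (drop i v))" using a by simp
  next
    fix b assume "b \<in> PR R"
    then obtain v1 v2 where b: "b = (v1, v2)" "mset v1 + mset v2 = R" by (auto simp: PR_def)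
    show "(case case b of (v1, v2) \<Rightarrow> (v1 @ v2, length v1) of (v, i) \<Rightarrow> (take i v, drop i v)) = b"
      using b by simp
    show "(case b of (v1, v2) \<Rightarrow> (v1 @ v2, length v1)) \<in> (SIGMA v:permutations_of_multiset R. {..length v})"
      using b by (simp add: pom_iff)
  qed
  finally show ?thesis .
qed

lemma sum_PR_decomp:
  "(\<Sum>(v1,v2)\<in>PR R. f v1 v2) = (\<Sum>v1\<in>VR R. \<Sum>v2\<in>permutations_of_multiset (R - mset v1). f v1 v2)"
proof -
  have eq: "PR R = (SIGMA v1:VR R. permutations_of_multiset (R - mset v1))"
  proof (intro set_eqI iffI)
    fix x assume "x \<in> PR R"
    then obtain v1 v2 where x: "x = (v1, v2)" "mset v1 + mset v2 = R" by (auto simp: PR_def)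
    then show "x \<in> (SIGMA v1:VR R. permutations_of_multiset (R - mset v1))"
      by (auto simp: VR_def pom_iff)
  next
    fix x assume "x \<in> (SIGMA v1:VR R. permutations_of_multiset (R - mset v1))"
    then obtain v1 v2 where x: "x = (v1, v2)" "mset v1 \<subseteq># R" "mset v2 = R - mset v1"
      by (auto simp: VR_def pom_iff)
    then show "x \<in> PR R" by (auto simp: PR_def)
  qed
  show ?thesis unfolding eq by (rule sum.Sigma[symmetric]) (auto simp: finite_VR)
qed

lemma sum_PR_swap: "(\<Sum>(v1,v2)\<in>PR R. f v1 v2) = (\<Sum>(v1,v2)\<in>PR R. f v2 v1)"
  by (rule sum.reindex_bij_witness[where i = "\<lambda>(a,b). (b,a)" and j = "\<lambda>(a,b). (b,a)"])
     (auto simp: PR_def add.commute)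

lemma Cf_add: "Cf (p + q) R = Cf p R + Cf q R" by (simp add: Cf_def sum.distrib)
lemma Cf_diff: "Cf (p - q) R = Cf p R - Cf q R" by (simp add: Cf_def sum_subtractf)
lemma Cf_smul: "Cf (ncsmul a p) R = a * Cf p R" by (simp add: Cf_def sum_distrib_left)
lemma Cf_zero: "Cf 0 R = 0" by (simp add: Cf_def)
lemma Phi_add: "Phi (p + q) e R = Phi p e R + Phi q e R" by (simp add: Phi_def sum.distrib)
lemma Phi_diff: "Phi (p - q) e R = Phi p e R - Phi q e R" by (simp add: Phi_def sum_subtractf)
lemma Phi_uminus: "Phi (- p) e R = - Phi p e R" by (simp add: Phi_def sum_negf)
lemma Phi_smul: "Phi (ncsmul a p) e R = a * Phi p e R" by (simp add: Phi_def sum_distrib_left)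
lemma Phi_zero: "Phi 0 e R = 0" by (simp add: Phi_def)
lemma Phi_sum: "Phi (\<Sum>i\<in>A. f i) e R = (\<Sum>i\<in>A. Phi (f i) e R)"
  unfolding Phi_def sum_fun_apply by (rule sum.swap)

lemma Cf_mul: "Cf (ncmul p q) R = (\<Sum>(v1,v2)\<in>PR R. p v1 * q v2)"
  unfolding Cf_def ncmul_def by (rule sum_pairs)

lemma Phi_mul_aux:
  assumes "q [] = 0"
  shows "ncmul p q (v @ [e]) = (\<Sum>i\<le>length v. p (take i v) * q (drop i v @ [e]))"
proof -
  have "ncmul p q (v @ [e]) = (\<Sum>i\<le>length v. p (take i (v @ [e])) * q (drop i (v @ [e]))) + p (v @ [e]) * q []"
    by (simp add: ncmul_def sum.atMost_Suc)
  also have "\<dots> = (\<Sum>i\<le>length v. p (take i v) * q (drop i v @ [e]))"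
    using assms by (auto intro!: sum.cong)
  finally show ?thesis .
qed

lemma Phi_mul:
  assumes "q [] = 0"
  shows "Phi (ncmul p q) e R = (\<Sum>(v1,v2)\<in>PR R. p v1 * q (v2 @ [e]))"
proof -
  have "Phi (ncmul p q) e R = (\<Sum>v\<in>permutations_of_multiset R. \<Sum>i\<le>length v. p (take i v) * q (drop i v @ [e]))"
    unfolding Phi_def by (simp only: Phi_mul_aux[where q=q, OF assms])
  also have "\<dots> = (\<Sum>(v1,v2)\<in>PR R. p v1 * q (v2 @ [e]))"
    by (rule sum_pairs)
  finally show ?thesis .
qed

lemma Cf_lbr: "Cf (lbr p q) R = 0"
proof -
  have "Cf (ncmul p q) R = Cf (ncmul q p) R"
    unfolding Cf_mul by (subst sum_PR_swap) (simp add: mult.commute case_prod_beta)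
  then show ?thesis by (simp add: lbr_eq Cf_diff)
qed

lemma Cf_lcs1:
  fixes p :: "'k::field ncpoly"
  assumes "p \<in> lcs n 1" shows "Cf p R = 0"
proof -
  have "(lcs n 1 :: 'k ncpoly set) \<subseteq> {p. \<forall>R. Cf p R = 0}"
    unfolding One_nat_def lcs.simps
  proof (rule brset_subset)
    show "subsp {p::'k ncpoly. \<forall>R. Cf p R = 0}" by (auto simp: subsp_def Cf_add Cf_smul Cf_zero)
  qed (simp add: Cf_lbr)
  then show ?thesis using assms by auto
qed

lemma Phi_mul_Cf0:
  assumes "\<And>R. Cf p R = 0" "q [] = 0"
  shows "Phi (ncmul p q) e R = 0"
proof -
  have "Phi (ncmul p q) e R = (\<Sum>(v1,v2)\<in>PR R. p v2 * q (v1 @ [e]))"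
    unfolding Phi_mul[where q=q, OF assms(2)] by (rule sum_PR_swap)
  also have "\<dots> = (\<Sum>v1\<in>VR R. \<Sum>v2\<in>permutations_of_multiset (R - mset v1). p v2 * q (v1 @ [e]))"
    by (rule sum_PR_decomp)
  also have "\<dots> = (\<Sum>v1\<in>VR R. Cf p (R - mset v1) * q (v1 @ [e]))"
    by (simp add: Cf_def sum_distrib_right)
  also have "\<dots> = 0" using assms(1) by simp
  finally show ?thesis .
qed

lemma ncvar_nil: "ncvar i [] = 0" by (simp add: ncvar_def)

lemma Phi_mul_var_left:
  assumes "d [] = 0"
  shows "Phi (ncmul (ncvar i) d) e R = (if i \<in># R then Phi d e (R - {#i#}) else 0)"
proof -
  have "Phi (ncmul (ncvar i) d) e R = (\<Sum>v1\<in>VR R. \<Sum>v2\<in>permutations_of_multiset (R - mset v1). ncvar i v1 * d (v2 @ [e]))"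
    unfolding Phi_mul[where q=d, OF assms] by (rule sum_PR_decomp)
  also have "\<dots> = (\<Sum>v1\<in>VR R. if v1 = [i] then Phi d e (R - mset v1) else 0)"
    by (intro sum.cong refl) (simp add: ncvar_def Phi_def)
  also have "\<dots> = (if [i] \<in> VR R then Phi d e (R - {#i#}) else 0)"
    by (simp add: sum.delta[OF finite_VR])
  also have "[i] \<in> VR R \<longleftrightarrow> i \<in># R" by (simp add: VR_def)
  finally show ?thesis .
qed

lemma Phi_var: "Phi (ncvar b) e R = (if R = {#} \<and> e = b then 1 else 0)"
proof (cases "R = {#}")
  case True then show ?thesis by (simp add: Phi_def ncvar_def)
next
  case False
  have "\<And>v. v \<in> permutations_of_multiset R \<Longrightarrow> ncvar b (v @ [e]) = 0"
    using False by (auto simp: pom_iff ncvar_def)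
  then have "(\<Sum>v\<in>permutations_of_multiset R. ncvar b (v @ [e])) = (0::'a)" by (rule sum.neutral[OF ballI])
  then show ?thesis using False by (simp add: Phi_def)
qed

lemma Phi_lbr_var:
  assumes "d \<in> lcs n 1"
  shows "Phi (lbr d (ncvar i)) e R = - (if i \<in># R then Phi d e (R - {#i#}) else 0)"
proof -
  have d0: "d [] = 0" using lcs_support[OF assms, of "[]"] by simp
  have "Phi (ncmul d (ncvar i)) e R = 0"
    by (rule Phi_mul_Cf0[where q="ncvar i", OF Cf_lcs1[OF assms] ncvar_nil])
  then show ?thesis by (simp add: lbr_eq Phi_diff Phi_mul_var_left[where d=d, OF d0])
qed

lemma Phi_lbr_lcs1:
  assumes "a \<in> lcs n 1" "b \<in> lcs n 1"
  shows "Phi (lbr a b) e R = 0"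
proof -
  have a0: "a [] = 0" using lcs_support[OF assms(1), of "[]"] by simp
  have b0: "b [] = 0" using lcs_support[OF assms(2), of "[]"] by simp
  show ?thesis
    by (simp add: lbr_eq Phi_diff Phi_mul_Cf0[where q=b, OF Cf_lcs1[OF assms(1)] b0] Phi_mul_Cf0[where q=a, OF Cf_lcs1[OF assms(2)] a0])
qed

lemma Phi_derived2:
  fixes d :: "'k::field ncpoly"
  assumes "d \<in> derived2 n" shows "Phi d e R = 0"
proof -
  have "(derived2 n :: 'k ncpoly set) \<subseteq> {p. \<forall>e R. Phi p e R = 0}"
    unfolding derived2_eq
  proof (rule brset_subset)
    show "subsp {p::'k ncpoly. \<forall>e R. Phi p e R = 0}" by (auto simp: subsp_def Phi_add Phi_smul Phi_zero)
  qed (simp add: Phi_lbr_lcs1)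
  then show ?thesis using assms by auto
qed

lemma Phi_lcs_support:
  assumes "p \<in> lcs n k" "size R < k"
  shows "Phi p e R = 0"
  unfolding Phi_def
proof (intro sum.neutral ballI)
  fix v assume "v \<in> permutations_of_multiset R"
  then have "length (v @ [e]) \<le> k" using assms(2) by (auto simp: pom_iff size_mset[symmetric] simp del: size_mset)
  then show "p (v @ [e]) = 0" by (rule lcs_support[OF assms(1)])
qed


definition ssum :: "nat \<Rightarrow> 'k::field ncpoly" where
  "ssum n = (\<Sum>i<n. ncvar i)"

lemma ssum_freeLie: "ssum n \<in> freeLie n"
  unfolding ssum_def by (intro subsp_sum[OF subsp_freeLie] freeLie.var) simp

lemma perm_ssum:
  assumes "\<pi> permutes {..<n}"
  shows "perm_act \<pi> (ssum n) = ssum n"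
proof -
  have "perm_act \<pi> (ssum n) = (\<Sum>i<n. ncvar (\<pi> i))"
    unfolding ssum_def perm_act_sum by (rule sum.cong[OF refl]) (rule perm_act_var[OF permutes_bij[OF assms]])
  also have "\<dots> = (\<Sum>i<n. ncvar i)"
    using sum.permute[OF assms, of ncvar] by (simp add: comp_def eq_commute)
  finally show ?thesis unfolding ssum_def .
qed

lemma Phi_lbr_s:
  assumes "d \<in> lcs n 1"
  shows "Phi (lbr d (ssum n)) e R = - (\<Sum>i<n. if i \<in># R then Phi d e (R - {#i#}) else 0)"
  unfolding ssum_def lbr_sum_right Phi_sum Phi_lbr_var[OF assms] by (simp add: sum_negf)

lemma torsion_comb:
  fixes h :: "nat multiset \<Rightarrow> 'k::field"
  assumes H: "\<And>Q. size Q = Suc m \<Longrightarrow> (\<Sum>i<n. if i \<in># Q then h (Q - {#i#}) else 0) = 0"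
    and n: "0 < n" and R: "size R = m"
  shows "h R = 0"
proof (rule ccontr)
  assume "h R \<noteq> 0"
  let ?P = "\<lambda>X. size X = m \<and> h X \<noteq> 0"
  have "?P R" using R \<open>h R \<noteq> 0\<close> by simp
  moreover have "\<forall>y. ?P y \<longrightarrow> count y 0 < Suc m"
    by (auto simp: le_imp_less_Suc count_le_size[where x = 0, simplified])
  ultimately obtain R0 where R0: "?P R0" and max: "\<And>y. ?P y \<Longrightarrow> count y 0 \<le> count R0 0"
    using Lattices_Big.ex_has_greatest_nat[of ?P R "\<lambda>y. count y 0" "Suc m"] by blast
  let ?Q = "add_mset 0 R0"
  have sz: "size ?Q = Suc m" using R0 by simp
  let ?f = "\<lambda>i. if i \<in># ?Q then h (?Q - {#i#}) else 0"
  have rest: "?f i = 0" if "i \<in> {..<n} - {0}" for i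
  proof (cases "i \<in># ?Q")
    case True
    then have i: "i \<in># R0" "i \<noteq> 0" using that by auto
    have eq: "?Q - {#i#} = add_mset 0 (R0 - {#i#})" using i by auto
    have "0 < size R0" using i(1) by (cases R0) auto
    then have "size (add_mset 0 (R0 - {#i#})) = m" using i R0 by (simp add: size_Diff_singleton)
    moreover have "count (add_mset 0 (R0 - {#i#})) 0 > count R0 0" using i by simp
    ultimately have "h (add_mset 0 (R0 - {#i#})) = 0" using max by force
    then show ?thesis using eq by simp
  qed simp
  have "(\<Sum>i<n. ?f i) = ?f 0 + (\<Sum>i\<in>{..<n} - {0}. ?f i)"
    using n by (simp add: sum.remove)
  also have "\<dots> = h R0" using rest by simp
  finally have "(\<Sum>i<n. ?f i) = h R0" .
  then show False using H[OF sz] R0 by simp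
qed

definition lnorm :: "'k::field ncpoly \<Rightarrow> nat list \<Rightarrow> 'k ncpoly" where
  "lnorm M cs = foldl (\<lambda>m c. lbr m (ncvar c)) M cs"

lemma lnorm_Nil[simp]: "lnorm M [] = M" by (simp add: lnorm_def)
lemma lnorm_Cons: "lnorm M (c # cs) = lnorm (lbr M (ncvar c)) cs" by (simp add: lnorm_def)
lemma lnorm_snoc: "lnorm M (cs @ [c]) = lbr (lnorm M cs) (ncvar c)" by (simp add: lnorm_def)

lemma lnorm_diff: "lnorm (A - B) cs = lnorm A cs - lnorm B cs"
proof (induction cs arbitrary: A B)
  case Nil then show ?case by simp
next
  case (Cons c cs) show ?case unfolding lnorm_Cons lbr_diff_left by (rule Cons.IH)
qed

lemma lnorm_add: "lnorm (A + B) cs = lnorm A cs + lnorm B cs"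
proof (induction cs arbitrary: A B)
  case Nil then show ?case by simp
next
  case (Cons c cs) show ?case unfolding lnorm_Cons lbr_add_left by (rule Cons.IH)
qed

lemma lnorm_lcs:
  assumes "M \<in> lcs n k" "set cs \<subseteq> {..<n}"
  shows "lnorm M cs \<in> lcs n (k + length cs)"
  using assms
proof (induction cs arbitrary: M k)
  case Nil then show ?case by simp
next
  case (Cons c cs)
  have "lbr M (ncvar c) \<in> lcs n (Suc k)" using Cons.prems by (intro lcs_br freeLie.var) auto
  then show ?case unfolding lnorm_Cons using Cons.IH[of "lbr M (ncvar c)" "Suc k"] Cons.prems by simp
qed

lemma lnorm_derived2:
  assumes "M \<in> derived2 n" "set cs \<subseteq> {..<n}"
  shows "lnorm M cs \<in> derived2 n"
  using assms
proof (induction cs arbitrary: M)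
  case Nil then show ?case by simp
next
  case (Cons c cs)
  have "lbr M (ncvar c) \<in> derived2 n" using Cons.prems by (intro derived2_ideal freeLie.var) auto
  then show ?case unfolding lnorm_Cons using Cons.IH Cons.prems by simp
qed

lemma lnorm_cong:
  assumes "A - B \<in> derived2 n" "set cs \<subseteq> {..<n}"
  shows "lnorm A cs - lnorm B cs \<in> derived2 n"
  unfolding lnorm_diff[symmetric] by (rule lnorm_derived2[OF assms])

lemma swap2:
  fixes M :: "'k::field ncpoly"
  assumes "M \<in> lcs n 1" "x < n" "y < n"
  shows "lbr (lbr M (ncvar x)) (ncvar y) - lbr (lbr M (ncvar y)) (ncvar x) \<in> derived2 n"
proof -
  have xy: "lbr (ncvar x) (ncvar y) \<in> lcs n 1"
    using assms by (simp add: brset_base freeLie.var)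
  have "lbr (lbr M (ncvar x)) (ncvar y) - lbr (lbr M (ncvar y)) (ncvar x) = lbr M (lbr (ncvar x) (ncvar y))"
    using jacobi[of M "ncvar x" "ncvar y"] by simp
  also have "\<dots> \<in> derived2 n" unfolding derived2_eq by (rule brset_base[OF assms(1) xy])
  finally show ?thesis .
qed

lemma lcs1_br_var: "M \<in> lcs n 1 \<Longrightarrow> x < n \<Longrightarrow> lbr M (ncvar x) \<in> lcs n 1"
  using lcs_br[of M n 1 "ncvar x"] lcs_Suc_subset[of n 1] freeLie.var by blast

lemma lnorm_insort:
  fixes M :: "'k::field ncpoly"
  assumes "M \<in> lcs n 1" "x < n" "set ys \<subseteq> {..<n}"
  shows "lnorm M (x # ys) - lnorm M (insort x ys) \<in> derived2 n"
  using assms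
proof (induction ys arbitrary: M)
  case Nil 
  have e: "lnorm M [x] - lnorm M (insort x []) = 0" by simp
  show ?case unfolding e by (rule subsp_0[OF subsp_derived2])
next
  case (Cons y ys)
  show ?case
  proof (cases "x \<le> y")
    case True 
    then have e: "lnorm M (x # y # ys) - lnorm M (insort x (y # ys)) = 0" by simp
    show ?thesis unfolding e by (rule subsp_0[OF subsp_derived2])
  next
    case False
    have y: "y < n" and ys: "set ys \<subseteq> {..<n}" using Cons.prems by auto
    have My: "lbr M (ncvar y) \<in> lcs n 1" by (rule lcs1_br_var[OF Cons.prems(1) y])
    have 1: "lnorm M (x # y # ys) - lnorm M (y # x # ys) \<in> derived2 n"
      unfolding lnorm_Cons
      by (rule lnorm_cong[OF swap2[OF Cons.prems(1,2) y] ys])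
    have 2: "lnorm M (y # x # ys) - lnorm M (y # insort x ys) \<in> derived2 n"
      unfolding lnorm_Cons[of M y] by (rule Cons.IH[OF My Cons.prems(2) ys])
    have e: "insort x (y # ys) = y # insort x ys" using False by simp
    show ?thesis unfolding e by (rule subsp_diff_trans[OF subsp_derived2 1 2])
  qed
qed

lemma lnorm_sort:
  fixes M :: "'k::field ncpoly"
  assumes "M \<in> lcs n 1" "set xs \<subseteq> {..<n}"
  shows "lnorm M xs - lnorm M (sort xs) \<in> derived2 n"
  using assms
proof (induction xs arbitrary: M)
  case Nil 
  have e: "lnorm M [] - lnorm M (sort []) = 0" by simp
  show ?case unfolding e by (rule subsp_0[OF subsp_derived2])
next
  case (Cons x xs)
  have x: "x < n" and xs: "set xs \<subseteq> {..<n}" using Cons.prems by auto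
  have 1: "lnorm M (x # xs) - lnorm M (x # sort xs) \<in> derived2 n"
    unfolding lnorm_Cons by (rule Cons.IH[OF lcs1_br_var[OF Cons.prems(1) x] xs])
  have 2: "lnorm M (x # sort xs) - lnorm M (insort x (sort xs)) \<in> derived2 n"
    by (rule lnorm_insort[OF Cons.prems(1) x]) (use xs in simp)
  have e: "sort (x # xs) = insort x (sort xs)" by simp
  show ?case unfolding e by (rule subsp_diff_trans[OF subsp_derived2 1 2])
qed

lemma lnorm_perm:
  fixes M :: "'k::field ncpoly"
  assumes "M \<in> lcs n 1" "set xs \<subseteq> {..<n}" "mset xs = mset ys"
  shows "lnorm M xs - lnorm M ys \<in> derived2 n"
proof -
  have ys: "set ys \<subseteq> {..<n}" using assms(2,3) by (metis set_mset_mset)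
  have "sort ys = sort xs" using assms(3) by (metis properties_for_sort mset_sort sorted_sort)
  then have "lnorm M (sort xs) - lnorm M ys \<in> derived2 n"
    using subsp_diff_sym[OF subsp_derived2 lnorm_sort[OF assms(1) ys]] by simp
  then show ?thesis
    by (rule subsp_diff_trans[OF subsp_derived2 lnorm_sort[OF assms(1,2)]])
qed

lemma mset_rem_iff: "(c \<in># R \<and> R - {#c#} = X) \<longleftrightarrow> R = add_mset c X"
proof
  assume "c \<in># R \<and> R - {#c#} = X"
  then show "R = add_mset c X" using insert_DiffM[of c R] by simp
next
  assume "R = add_mset c X"
  then show "c \<in># R \<and> R - {#c#} = X" by simp
qed

lemma Phi_var_mul_aux:
  "Phi (ncmul (ncvar a) (ncvar b)) e R = (if R = {#a#} \<and> e = b then 1 else 0)"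
proof -
  have "Phi (ncmul (ncvar a) (ncvar b)) e R = (if a \<in># R then Phi (ncvar b) e (R - {#a#}) else 0)"
    by (rule Phi_mul_var_left[where d="ncvar b", OF ncvar_nil])
  also have "\<dots> = (if a \<in># R \<and> R - {#a#} = {#} \<and> e = b then 1 else 0)"
    unfolding Phi_var by simp
  also have "(a \<in># R \<and> R - {#a#} = {#} \<and> e = b) \<longleftrightarrow> (R = {#a#} \<and> e = b)"
    using mset_rem_iff[of a R "{#}"] by blast
  finally show ?thesis .
qed

lemma Phi_lnorm:
  assumes "a < n" "b < n" "set cs \<subseteq> {..<n}"
  shows "Phi (lnorm (lbr (ncvar a) (ncvar b)) cs) e R =
    (-1) ^ length cs * ((if R = add_mset a (mset cs) \<and> e = b then 1 else 0)
                       - (if R = add_mset b (mset cs) \<and> e = a then 1 else 0))"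
  using assms(3)
proof (induction cs arbitrary: R rule: rev_induct)
  case Nil
  have e: "lnorm (lbr (ncvar a) (ncvar b)) [] = ncmul (ncvar a) (ncvar b) - ncmul (ncvar b) (ncvar a)"
    by (simp add: lbr_eq)
  show ?case unfolding e Phi_diff Phi_var_mul_aux by (simp only: list.size power_0 mult_1 mset.simps(1))
next
  case (snoc c cs)
  have cs: "set cs \<subseteq> {..<n}" and c: "c < n" using snoc.prems by auto
  have ab: "lbr (ncvar a) (ncvar b) \<in> lcs n 1"
    using assms(1,2) by (simp add: brset_base freeLie.var)
  have "lnorm (lbr (ncvar a) (ncvar b)) cs \<in> lcs n (1 + length cs)" by (rule lnorm_lcs[OF ab cs])
  then have D: "lnorm (lbr (ncvar a) (ncvar b)) cs \<in> lcs n 1"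
    using lcs_mono[of 1 "1 + length cs" n] by auto
  define X1 where "X1 = (if R = add_mset a (mset (cs @ [c])) \<and> e = b then 1 else (0::'a))"
  define X2 where "X2 = (if R = add_mset b (mset (cs @ [c])) \<and> e = a then 1 else (0::'a))"
  have ms: "mset (cs @ [c]) = add_mset c (mset cs)" by simp
  have lhs: "Phi (lnorm (lbr (ncvar a) (ncvar b)) (cs @ [c])) e R
      = - (if c \<in># R then Phi (lnorm (lbr (ncvar a) (ncvar b)) cs) e (R - {#c#}) else 0)"
    unfolding lnorm_snoc by (rule Phi_lbr_var[OF D])
  show ?case
  proof (cases "c \<in># R")
    case True
    have e1: "(R - {#c#} = add_mset a (mset cs)) \<longleftrightarrow> R = add_mset a (mset (cs @ [c]))"
      unfolding ms add_mset_commute[of a c] using mset_rem_iff[of c R "add_mset a (mset cs)"] True by blast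
    have e2: "(R - {#c#} = add_mset b (mset cs)) \<longleftrightarrow> R = add_mset b (mset (cs @ [c]))"
      unfolding ms add_mset_commute[of b c] using mset_rem_iff[of c R "add_mset b (mset cs)"] True by blast
    have "Phi (lnorm (lbr (ncvar a) (ncvar b)) cs) e (R - {#c#}) = (-1) ^ length cs * (X1 - X2)"
      unfolding snoc.IH[OF cs] X1_def X2_def e1 e2 ..
    then show ?thesis unfolding lhs X1_def[symmetric] X2_def[symmetric] using True by simp
  next
    case False
    have "R \<noteq> add_mset a (mset (cs @ [c]))" "R \<noteq> add_mset b (mset (cs @ [c]))" using False by auto
    then have "X1 = 0" "X2 = 0" unfolding X1_def X2_def by auto
    then show ?thesis unfolding lhs X1_def[symmetric] X2_def[symmetric] using False by simp
  qed
qed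


definition Tset :: "nat \<Rightarrow> nat \<Rightarrow> (nat \<times> nat \<times> nat list) set" where
  "Tset n m = {(a, b, cs). a < n \<and> b < a \<and> sorted cs \<and> length cs = m - 1 \<and> (\<forall>c\<in>set cs. b \<le> c \<and> c < n)}"

definition Bt :: "nat \<times> nat \<times> nat list \<Rightarrow> 'k::field ncpoly" where
  "Bt t = (case t of (a, b, cs) \<Rightarrow> lnorm (lbr (ncvar a) (ncvar b)) cs)"

definition Sp :: "nat \<Rightarrow> nat \<Rightarrow> 'k::field ncpoly set" where
  "Sp n m = {g. \<exists>l. g - (\<Sum>t\<in>Tset n m. ncsmul (l t) (Bt t)) \<in> idealI n (Suc m)}"

lemma finite_Tset: "finite (Tset n m)"
proof -
  have "Tset n m \<subseteq> {..<n} \<times> {..<n} \<times> {cs. set cs \<subseteq> {..<n} \<and> length cs = m - 1}"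
    unfolding Tset_def by auto
  moreover have "finite ({..<n} \<times> {..<n} \<times> {cs. set cs \<subseteq> {..<n} \<and> length cs = m - 1})"
    by (intro finite_cartesian_product finite_lists_length_eq) auto
  ultimately show ?thesis by (rule finite_subset)
qed

lemma Sp_I: "g - (\<Sum>t\<in>Tset n m. ncsmul (l t) (Bt t)) \<in> idealI n (Suc m) \<Longrightarrow> g \<in> Sp n m"
  unfolding Sp_def by blast

lemma subsp_Sp: "subsp (Sp n m :: 'k::field ncpoly set)"
  unfolding subsp_def
proof (intro conjI ballI allI)
  have e: "(0::'k ncpoly) - (\<Sum>t\<in>Tset n m. ncsmul ((\<lambda>t. 0) t) (Bt t)) = 0" by simp
  show "0 \<in> (Sp n m :: 'k ncpoly set)"
    by (rule Sp_I[where l = "\<lambda>t. 0"]) (unfold e, rule subsp_0[OF subsp_idealI])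
next
  fix p q :: "'k ncpoly" assume "p \<in> Sp n m" "q \<in> Sp n m"
  then obtain l l' where l: "p - (\<Sum>t\<in>Tset n m. ncsmul (l t) (Bt t)) \<in> idealI n (Suc m)"
    and l': "q - (\<Sum>t\<in>Tset n m. ncsmul (l' t) (Bt t)) \<in> idealI n (Suc m)"
    unfolding Sp_def by blast
  have e: "(p + q) - (\<Sum>t\<in>Tset n m. ncsmul (l t + l' t) (Bt t))
     = (p - (\<Sum>t\<in>Tset n m. ncsmul (l t) (Bt t))) + (q - (\<Sum>t\<in>Tset n m. ncsmul (l' t) (Bt t)))"
    by (simp add: ncsmul_addl sum.distrib algebra_simps)
  show "p + q \<in> Sp n m"
    by (rule Sp_I[where l = "\<lambda>t. l t + l' t"]) (unfold e, rule subsp_add[OF subsp_idealI l l'])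
next
  fix a and p :: "'k ncpoly" assume "p \<in> Sp n m"
  then obtain l where l: "p - (\<Sum>t\<in>Tset n m. ncsmul (l t) (Bt t)) \<in> idealI n (Suc m)"
    unfolding Sp_def by blast
  have e: "ncsmul a p - (\<Sum>t\<in>Tset n m. ncsmul (a * l t) (Bt t))
     = ncsmul a (p - (\<Sum>t\<in>Tset n m. ncsmul (l t) (Bt t)))"
    by (simp add: ncsmul_diff ncsmul_sum ncsmul_smul)
  show "ncsmul a p \<in> Sp n m"
    by (rule Sp_I[where l = "\<lambda>t. a * l t"]) (unfold e, rule subsp_smul[OF subsp_idealI l])
qed

lemma Sp_cong:
  assumes "g' \<in> Sp n m" "g - g' \<in> idealI n (Suc m)"
  shows "g \<in> Sp n m"
proof -
  obtain l where l: "g' - (\<Sum>t\<in>Tset n m. ncsmul (l t) (Bt t)) \<in> idealI n (Suc m)"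
    using assms(1) unfolding Sp_def by blast
  have e: "g - (\<Sum>t\<in>Tset n m. ncsmul (l t) (Bt t)) = (g - g') + (g' - (\<Sum>t\<in>Tset n m. ncsmul (l t) (Bt t)))"
    by simp
  show ?thesis by (rule Sp_I[where l = l]) (unfold e, rule subsp_add[OF subsp_idealI assms(2) l])
qed

lemma Bt_Sp:
  assumes "t \<in> Tset n m"
  shows "(Bt t :: 'k::field ncpoly) \<in> Sp n m"
proof -
  have "(\<Sum>t'\<in>Tset n m. ncsmul (if t' = t then 1 else 0) (Bt t' :: 'k ncpoly))
      = (\<Sum>t'\<in>Tset n m. if t' = t then Bt t' else 0)"
    by (intro sum.cong refl) simp
  also have "\<dots> = Bt t" using assms finite_Tset by (simp add: sum.delta)
  finally have e: "Bt t - (\<Sum>t'\<in>Tset n m. ncsmul (if t' = t then 1 else 0) (Bt t' :: 'k ncpoly)) = 0"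
    by simp
  show ?thesis
    by (rule Sp_I[where l = "\<lambda>t'. if t' = t then 1 else 0"]) (unfold e, rule subsp_0[OF subsp_idealI])
qed

lemma idealI_br_Suc:
  fixes r x :: "'k::field ncpoly"
  assumes "r \<in> idealI n k" "x \<in> freeLie n"
  shows "lbr r x \<in> idealI n (Suc k)"
proof -
  obtain a b where ab: "r = a + b" "a \<in> derived2 n" "b \<in> lcs n k"
    using assms(1) unfolding idealI_eq by blast
  have 1: "lbr a x \<in> idealI n (Suc k)" by (rule derived2_I[OF derived2_ideal[OF ab(2) assms(2)]])
  have 2: "lbr b x \<in> idealI n (Suc k)" by (rule lcs_I[OF lcs_br[OF ab(3) assms(2)]])
  show ?thesis unfolding ab lbr_add_left by (rule subsp_add[OF subsp_idealI 1 2])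
qed

definition lin1 :: "nat \<Rightarrow> 'k::field ncpoly \<Rightarrow> 'k ncpoly" where
  "lin1 n p = (\<Sum>i<n. ncsmul (p [i]) (ncvar i))"

lemma lin1_add: "lin1 n (p + q) = lin1 n p + lin1 n q"
  by (simp add: lin1_def ncsmul_addl sum.distrib)
lemma lin1_smul: "lin1 n (ncsmul a p) = ncsmul a (lin1 n p)"
  by (simp add: lin1_def ncsmul_sum ncsmul_smul)
lemma lin1_var: "i < n \<Longrightarrow> lin1 n (ncvar i) = ncvar i"
proof -
  assume i: "i < n"
  have "lin1 n (ncvar i) = (\<Sum>k<n. if k = i then ncvar k else 0)"
    unfolding lin1_def by (intro sum.cong refl) (simp add: ncvar_def)
  also have "\<dots> = ncvar i" using i by (simp add: sum.delta)
  finally show ?thesis .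
qed
lemma lin1_lcs1: "p \<in> lcs n 1 \<Longrightarrow> lin1 n p = 0"
  unfolding lin1_def using lcs_support[of p n 1] by simp

lemma lin1_diff_lcs1:
  fixes p :: "'k::field ncpoly"
  assumes "p \<in> freeLie n"
  shows "p - lin1 n p \<in> lcs n 1"
  using assms
proof (induction rule: freeLie.induct)
  case zero
  have e: "nczero - lin1 n (nczero :: 'k ncpoly) = 0" by (simp add: nczero_eq lin1_def)
  show ?case unfolding e by (rule subsp_0[OF subsp_lcs])
next
  case (var i)
  have e: "ncvar i - lin1 n (ncvar i :: 'k ncpoly) = 0" using var by (simp add: lin1_var)
  show ?case unfolding e by (rule subsp_0[OF subsp_lcs])
next
  case (add p q)
  have e: "ncadd p q - lin1 n (ncadd p q) = (p - lin1 n p) + (q - lin1 n q)"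
    by (simp add: ncadd_eq lin1_add)
  show ?case unfolding e by (rule subsp_add[OF subsp_lcs add.IH])
next
  case (smul p a)
  have e: "ncsmul a p - lin1 n (ncsmul a p) = ncsmul a (p - lin1 n p)"
    by (simp add: lin1_smul ncsmul_diff)
  show ?case unfolding e by (rule subsp_smul[OF subsp_lcs smul.IH])
next
  case (br p q)
  have pq: "lbr p q \<in> lcs n 1" using br.hyps by (simp add: brset_base)
  have e: "lbr p q - lin1 n (lbr p q) = lbr p q" using lin1_lcs1[OF pq] by simp
  show ?case unfolding e by (rule pq)
qed

lemma lbr_lin1: "lbr a (lin1 n x) = (\<Sum>i<n. ncsmul (x [i]) (lbr a (ncvar i)))"
  unfolding lin1_def lbr_sum_right lbr_smul_right ..

lemma lbr_lin1_left: "lbr (lin1 n x) b = (\<Sum>i<n. ncsmul (x [i]) (lbr (ncvar i) b))"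
  unfolding lin1_def lbr_sum_left lbr_smul_left ..

lemma Sp_uminus: "(p :: 'k::field ncpoly) \<in> Sp n m \<Longrightarrow> - p \<in> Sp n m"
  by (rule subsp_uminus[OF subsp_Sp])

lemma span_pair:
  assumes "i < n" "k < n"
  shows "(lbr (ncvar k) (ncvar i) :: 'k::field ncpoly) \<in> Sp n 1"
proof (cases rule: linorder_cases[of i k])
  case less
  have "(k, i, []) \<in> Tset n 1" using assms less by (simp add: Tset_def)
  then have "(Bt (k, i, []) :: 'k ncpoly) \<in> Sp n 1" by (rule Bt_Sp)
  then show ?thesis by (simp add: Bt_def)
next
  case equal
  show ?thesis unfolding equal lbr_self by (rule subsp_0[OF subsp_Sp])
next
  case greater
  have "(i, k, []) \<in> Tset n 1" using assms greater by (simp add: Tset_def)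
  then have "(Bt (i, k, []) :: 'k ncpoly) \<in> Sp n 1" by (rule Bt_Sp)
  then have "- lbr (ncvar i) (ncvar k) \<in> (Sp n 1 :: 'k ncpoly set)" by (simp add: Bt_def Sp_uminus)
  then show ?thesis by (subst lbr_antisym)
qed

lemma span_step1:
  fixes a :: "'k::field ncpoly"
  assumes "a \<in> freeLie n" "i < n"
  shows "lbr a (ncvar i) \<in> Sp n 1"
proof (rule Sp_cong)
  show "lbr (lin1 n a) (ncvar i) \<in> Sp n 1"
    unfolding lbr_lin1_left
    by (intro subsp_sum[OF subsp_Sp] subsp_smul[OF subsp_Sp] span_pair assms(2)) simp
  have "lbr (a - lin1 n a) (ncvar i) \<in> lcs n (Suc 1)"
    by (rule lcs_br[OF lin1_diff_lcs1[OF assms(1)] freeLie.var[OF assms(2)]])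
  then show "lbr a (ncvar i) - lbr (lin1 n a) (ncvar i) \<in> idealI n (Suc 1)"
    unfolding lbr_diff_left[symmetric] by (rule lcs_I)
qed

lemma Bt_lcs1:
  assumes "a < n" "b < n" "set cs \<subseteq> {..<n}"
  shows "(lnorm (lbr (ncvar a) (ncvar b)) cs :: 'k::field ncpoly) \<in> lcs n 1"
proof -
  have ab: "(lbr (ncvar a) (ncvar b) :: 'k ncpoly) \<in> lcs n 1"
    using assms(1,2) by (simp add: brset_base freeLie.var)
  have "(lnorm (lbr (ncvar a) (ncvar b)) cs :: 'k ncpoly) \<in> lcs n (1 + length cs)" by (rule lnorm_lcs[OF ab assms(3)])
  then show ?thesis using lcs_mono[of 1 "1 + length cs" n] by auto
qed

lemma perm_to_Sp:
  fixes M :: "'k::field ncpoly"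
  assumes "(a, b, ys) \<in> Tset n m" "a < n" "b < n" "set xs \<subseteq> {..<n}" "mset xs = mset ys"
  shows "lnorm (lbr (ncvar a) (ncvar b)) xs \<in> (Sp n m :: 'k ncpoly set)"
proof (rule Sp_cong)
  show "lnorm (lbr (ncvar a) (ncvar b)) ys \<in> (Sp n m :: 'k ncpoly set)"
    using Bt_Sp[OF assms(1)] by (simp add: Bt_def)
  have ab: "(lbr (ncvar a) (ncvar b) :: 'k ncpoly) \<in> lcs n 1"
    using assms(2,3) by (simp add: brset_base freeLie.var)
  show "lnorm (lbr (ncvar a) (ncvar b)) xs - lnorm (lbr (ncvar a) (ncvar b)) ys \<in> (idealI n (Suc m) :: 'k ncpoly set)"
    by (rule derived2_I[OF lnorm_perm[OF ab assms(4,5)]])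
qed

lemma span_rewrite:
  assumes t: "t \<in> Tset n (Suc k)" and i: "i < n"
  shows "lbr (Bt t) (ncvar i) \<in> (Sp n (Suc (Suc k)) :: 'k::field ncpoly set)"
proof -
  obtain a b cs where tt: "t = (a, b, cs)" by (cases t)
  have a: "a < n" and ba: "b < a" and cs: "sorted cs" "length cs = k" "\<forall>c\<in>set cs. b \<le> c \<and> c < n"
    using t unfolding tt Tset_def by auto
  have b: "b < n" using a ba by simp
  have csn: "set cs \<subseteq> {..<n}" using cs(3) by auto
  let ?M = "lbr (ncvar a) (ncvar b) :: 'k ncpoly"
  have e0: "lbr (Bt t) (ncvar i) = lnorm ?M (cs @ [i])" unfolding tt Bt_def lnorm_snoc by simp
  show ?thesis
  proof (cases "b \<le> i")
    case True
    have "(a, b, insort i cs) \<in> Tset n (Suc (Suc k))"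
      using a ba cs True i by (auto simp: Tset_def sorted_insort set_insort_key)
    then show ?thesis unfolding e0
      by (rule perm_to_Sp[OF _ a b]) (use csn i in auto)
  next
    case False
    have M: "?M \<in> lcs n 1" using a b by (simp add: brset_base freeLie.var)
    have csi: "set (cs @ [i]) \<subseteq> {..<n}" using csn i by auto
    have 1: "lnorm ?M (cs @ [i]) - lnorm ?M (i # cs) \<in> derived2 n"
      by (rule lnorm_perm[OF M csi]) simp
    have jac: "lbr ?M (ncvar i) = lbr (lbr (ncvar a) (ncvar i)) (ncvar b) - lbr (lbr (ncvar b) (ncvar i)) (ncvar a)"
    proof -
      have "lbr ?M (ncvar i) = lbr (lbr (ncvar a) (ncvar i)) (ncvar b) + lbr (ncvar a) (lbr (ncvar b) (ncvar i))"
        by (rule jacobi)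
      also have "lbr (ncvar a) (lbr (ncvar b) (ncvar i)) = - lbr (lbr (ncvar b) (ncvar i)) (ncvar a)"
        by (rule lbr_antisym)
      finally show ?thesis unfolding diff_conv_add_uminus .
    qed
    have e1: "lnorm ?M (i # cs) = lnorm (lbr (ncvar a) (ncvar i)) (b # cs) - lnorm (lbr (ncvar b) (ncvar i)) (a # cs)"
      unfolding lnorm_Cons jac lnorm_diff ..
    have T1: "(a, i, insort b cs) \<in> Tset n (Suc (Suc k))"
      using a ba cs False i by (auto simp: Tset_def sorted_insort set_insort_key)
    have T2: "(b, i, insort a cs) \<in> Tset n (Suc (Suc k))"
      using a b ba cs False i by (auto simp: Tset_def sorted_insort set_insort_key)
    have S1: "lnorm (lbr (ncvar a) (ncvar i)) (b # cs) \<in> (Sp n (Suc (Suc k)) :: 'k ncpoly set)"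
      by (rule perm_to_Sp[OF T1 a i]) (use csn b in auto)
    have S2: "lnorm (lbr (ncvar b) (ncvar i)) (a # cs) \<in> (Sp n (Suc (Suc k)) :: 'k ncpoly set)"
      by (rule perm_to_Sp[OF T2 b i]) (use csn a in auto)
    have "lnorm ?M (i # cs) \<in> Sp n (Suc (Suc k))"
      unfolding e1 by (rule subsp_diff[OF subsp_Sp S1 S2])
    then show ?thesis unfolding e0 by (rule Sp_cong) (rule derived2_I[OF 1])
  qed
qed

lemma span_step:
  fixes a :: "'k::field ncpoly"
  assumes "a \<in> Sp n (Suc k)" "i < n"
  shows "lbr a (ncvar i) \<in> Sp n (Suc (Suc k))"
proof -
  obtain l where l: "a - (\<Sum>t\<in>Tset n (Suc k). ncsmul (l t) (Bt t)) \<in> idealI n (Suc (Suc k))"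
    using assms(1) unfolding Sp_def by blast
  let ?S = "(\<Sum>t\<in>Tset n (Suc k). ncsmul (l t) (Bt t)) :: 'k ncpoly"
  have S: "lbr ?S (ncvar i) \<in> Sp n (Suc (Suc k))"
    unfolding lbr_sum_left lbr_smul_left
    by (intro subsp_sum[OF subsp_Sp] subsp_smul[OF subsp_Sp] span_rewrite assms(2))
  have "lbr (a - ?S) (ncvar i) \<in> idealI n (Suc (Suc (Suc k)))"
    by (rule idealI_br_Suc[OF l freeLie.var[OF assms(2)]])
  then show ?thesis unfolding lbr_diff_left by (intro Sp_cong[OF S])
qed

lemma span_lcs:
  fixes a :: "'k::field ncpoly"
  shows "a \<in> lcs n (Suc k) \<Longrightarrow> a \<in> Sp n (Suc k)"
proof (induction k arbitrary: a)
  case 0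
  have "lcs n (Suc 0) \<subseteq> (Sp n (Suc 0) :: 'k ncpoly set)"
    unfolding lcs.simps
  proof (rule brset_subset[OF _ subsp_Sp])
    fix a x :: "'k ncpoly" assume aL: "a \<in> freeLie n" and x: "x \<in> freeLie n"
    have a: "a \<in> lcs n 0" using aL by simp
    show "lbr a x \<in> Sp n (Suc 0)"
    proof (rule Sp_cong)
      have "\<And>i. i < n \<Longrightarrow> lbr a (ncvar i) \<in> Sp n (Suc 0)"
        using span_step1[OF aL] by (simp only: One_nat_def)
      then show "lbr a (lin1 n x) \<in> Sp n (Suc 0)"
        unfolding lbr_lin1
        by (intro subsp_sum[OF subsp_Sp] subsp_smul[OF subsp_Sp]) auto
      have "lbr a (x - lin1 n x) \<in> lcs n (0 + 2)" by (rule lcs1_br'[OF lin1_diff_lcs1[OF x] a])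
      then show "lbr a x - lbr a (lin1 n x) \<in> idealI n (Suc (Suc 0))"
        unfolding lbr_diff_right[symmetric] by (intro lcs_I) simp
    qed
  qed
  then show ?case using 0 by blast
next
  case (Suc k)
  have "lcs n (Suc (Suc k)) \<subseteq> (Sp n (Suc (Suc k)) :: 'k ncpoly set)"
    unfolding lcs.simps(2)[of n "Suc k"]
  proof (rule brset_subset[OF _ subsp_Sp])
    fix a x :: "'k ncpoly" assume a: "a \<in> lcs n (Suc k)" and x: "x \<in> freeLie n"
    show "lbr a x \<in> Sp n (Suc (Suc k))"
    proof (rule Sp_cong)
      have "\<And>i. i < n \<Longrightarrow> lbr a (ncvar i) \<in> Sp n (Suc (Suc k))"
        by (rule span_step[OF Suc.IH[OF a]])
      then show "lbr a (lin1 n x) \<in> Sp n (Suc (Suc k))"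
        unfolding lbr_lin1
        by (intro subsp_sum[OF subsp_Sp] subsp_smul[OF subsp_Sp]) auto
      have "lbr a (x - lin1 n x) \<in> lcs n (Suc k + 2)" by (rule lcs1_br'[OF lin1_diff_lcs1[OF x] a])
      then show "lbr a x - lbr a (lin1 n x) \<in> idealI n (Suc (Suc (Suc k)))"
        unfolding lbr_diff_right[symmetric] by (intro lcs_I) simp
    qed
  qed
  then show ?case using Suc.prems by blast
qed


lemma Phi_idealI:
  fixes p :: "'k::field ncpoly"
  assumes "p \<in> idealI n k" "size R < k"
  shows "Phi p e R = 0"
proof -
  obtain a b where ab: "p = a + b" "a \<in> derived2 n" "b \<in> lcs n k"
    using assms(1) unfolding idealI_eq by blast
  show ?thesis unfolding ab Phi_add Phi_derived2[OF ab(2)] Phi_lcs_support[OF ab(3) assms(2)] by simp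
qed

lemma sorted_mset_eq: "sorted xs \<Longrightarrow> sorted ys \<Longrightarrow> mset xs = mset ys \<Longrightarrow> xs = ys"
  by (metis properties_for_sort sorted_sort_id)

lemma Tset_unique:
  assumes t: "t \<in> Tset n m" and t0: "(a0, b0, cs0) \<in> Tset n m"
  shows "Phi (Bt t :: 'k::field ncpoly) a0 (add_mset b0 (mset cs0)) = (if t = (a0, b0, cs0) then - ((-1) ^ (m - 1)) else 0)"
proof -
  obtain a b cs where tt: "t = (a, b, cs)" by (cases t)
  have A: "a < n" "b < a" "sorted cs" "length cs = m - 1" "\<forall>c\<in>set cs. b \<le> c \<and> c < n"
    using t unfolding tt Tset_def by auto
  have A0: "a0 < n" "b0 < a0" "sorted cs0" "length cs0 = m - 1" "\<forall>c\<in>set cs0. b0 \<le> c \<and> c < n"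
    using t0 unfolding Tset_def by auto
  have csn: "set cs \<subseteq> {..<n}" using A(5) by auto
  have X1: "\<not> (add_mset b0 (mset cs0) = add_mset a (mset cs) \<and> a0 = b)"
  proof
    assume H: "add_mset b0 (mset cs0) = add_mset a (mset cs) \<and> a0 = b"
    then have "b0 \<in># add_mset a (mset cs)" by (metis union_single_eq_member)
    then have "b0 = a \<or> b0 \<in> set cs" by auto
    then show False using A A0 H by auto
  qed
  have X2: "(add_mset b0 (mset cs0) = add_mset b (mset cs) \<and> a0 = a) \<longleftrightarrow> t = (a0, b0, cs0)"
  proof
    assume H: "add_mset b0 (mset cs0) = add_mset b (mset cs) \<and> a0 = a"
    have "b \<in># add_mset b0 (mset cs0)" using H by (metis union_single_eq_member)
    then have 1: "b0 \<le> b" using A0(5) by auto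
    have "b0 \<in># add_mset b (mset cs)" using H by (metis union_single_eq_member)
    then have 2: "b \<le> b0" using A(5) by auto
    have bb: "b = b0" using 1 2 by simp
    then have "mset cs0 = mset cs" using H by simp
    then have "cs0 = cs" using sorted_mset_eq A(3) A0(3) by blast
    then show "t = (a0, b0, cs0)" using tt bb H by simp
  next
    assume "t = (a0, b0, cs0)"
    then show "add_mset b0 (mset cs0) = add_mset b (mset cs) \<and> a0 = a" using tt by simp
  qed
  have "Phi (Bt t :: 'k ncpoly) a0 (add_mset b0 (mset cs0)) =
    (-1) ^ length cs * ((if add_mset b0 (mset cs0) = add_mset a (mset cs) \<and> a0 = b then 1 else 0)
                       - (if add_mset b0 (mset cs0) = add_mset b (mset cs) \<and> a0 = a then 1 else 0))"
    unfolding tt Bt_def using A(1,2) by (simp only: case_prod_conv Phi_lnorm[OF A(1) _ csn] order.strict_trans)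
  also have "\<dots> = (if t = (a0, b0, cs0) then - ((-1) ^ (m - 1)) else 0)"
    using X1 X2 A(4) by simp
  finally show ?thesis .
qed

lemma extraction:
  fixes g :: "'k::field ncpoly"
  assumes g: "g \<in> Sp n (Suc k)" and H: "\<And>e R. size R = Suc k \<Longrightarrow> Phi g e R = 0"
  shows "g \<in> idealI n (Suc (Suc k))"
proof -
  obtain l where l: "g - (\<Sum>t\<in>Tset n (Suc k). ncsmul (l t) (Bt t)) \<in> idealI n (Suc (Suc k))"
    using g unfolding Sp_def by blast
  let ?S = "(\<Sum>t\<in>Tset n (Suc k). ncsmul (l t) (Bt t)) :: 'k ncpoly"
  have PS: "Phi ?S e R = 0" if "size R = Suc k" for e R
  proof -
    have "Phi (g - ?S) e R = 0" by (rule Phi_idealI[OF l]) (use that in simp)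
    then show ?thesis using H[OF that] by (simp add: Phi_diff)
  qed
  have l0: "l t0 = 0" if t0: "t0 \<in> Tset n (Suc k)" for t0
  proof -
    obtain a0 b0 cs0 where tt: "t0 = (a0, b0, cs0)" by (cases t0)
    have len: "length cs0 = k" using t0 unfolding tt Tset_def by auto
    have "Phi ?S a0 (add_mset b0 (mset cs0)) = (\<Sum>t\<in>Tset n (Suc k). l t * Phi (Bt t) a0 (add_mset b0 (mset cs0)))"
      unfolding Phi_sum Phi_smul ..
    also have "\<dots> = (\<Sum>t\<in>Tset n (Suc k). if t = t0 then l t * (- ((-1) ^ k)) else 0)"
    proof (intro sum.cong refl)
      fix t assume "t \<in> Tset n (Suc k)"
      have E: "Phi (Bt t :: 'k ncpoly) a0 (add_mset b0 (mset cs0)) = (if t = t0 then - ((-1) ^ k) else 0)"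
        using Tset_unique[OF \<open>t \<in> Tset n (Suc k)\<close> t0[unfolded tt]] unfolding tt[symmetric] by (cases "t = t0") simp_all
      show "l t * Phi (Bt t) a0 (add_mset b0 (mset cs0)) = (if t = t0 then l t * (- ((-1) ^ k)) else 0)"
        unfolding E by simp
    qed
    also have "\<dots> = l t0 * (- ((-1) ^ k))" using t0 finite_Tset by (simp add: sum.delta)
    finally have "l t0 * (- ((-1) ^ k)) = 0" using PS[of "add_mset b0 (mset cs0)" a0] len by simp
    then show ?thesis by simp
  qed
  have "?S = (\<Sum>t\<in>Tset n (Suc k). 0)" by (intro sum.cong refl) (simp add: l0)
  then have "?S = 0" by simp
  then show ?thesis using l by simp
qed

lemma torsion:
  fixes g R :: "'k::field ncpoly"
  assumes n: "0 < n" and c: "Suc k + 2 \<le> c"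
    and g: "g \<in> lcs n (Suc k)" and R: "R \<in> lcs n (Suc k + 2)"
    and H: "lbr g (ssum n) - R \<in> idealI n c"
  shows "\<exists>g'\<in>lcs n (Suc (Suc k)). g - g' \<in> idealI n c"
proof -
  have g1: "g \<in> lcs n 1" using g lcs_mono[of 1 "Suc k" n] by auto
  have Z: "(\<Sum>i<n. if i \<in># Q then Phi g e (Q - {#i#}) else 0) = 0" if Q: "size Q = Suc (Suc k)" for e Q
  proof -
    have "Phi (lbr g (ssum n) - R) e Q = 0" by (rule Phi_idealI[OF H]) (use Q c in simp)
    moreover have "Phi R e Q = 0" by (rule Phi_lcs_support[OF R]) (use Q in simp)
    ultimately have "Phi (lbr g (ssum n)) e Q = 0" by (simp add: Phi_diff)
    then show ?thesis unfolding Phi_lbr_s[OF g1] by simp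
  qed
  have P0: "Phi g e R' = 0" if "size R' = Suc k" for e R'
    by (rule torsion_comb[where h = "Phi g e", OF Z n that])
  have "g \<in> idealI n (Suc (Suc k))" by (rule extraction[OF span_lcs[OF g] P0])
  then obtain a b where ab: "g = a + b" "a \<in> derived2 n" "b \<in> lcs n (Suc (Suc k))"
    unfolding idealI_eq by blast
  have "g - b \<in> idealI n c" using ab derived2_I by simp
  then show ?thesis using ab(3) by blast
qed


lemma ssum_apply: "ssum n w = (\<Sum>i<n. ncvar i w)"
  unfolding ssum_def sum_fun_apply ..

lemma ssum_nil: "ssum n [] = 0" by (simp add: ssum_apply ncvar_def)
lemma ssum_single: "ssum n [j] = (if j < n then 1 else 0)"
proof -
  have "ssum n [j] = (\<Sum>i<n. if i = j then 1 else 0)"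
    unfolding ssum_apply by (intro sum.cong refl) (auto simp: ncvar_def)
  then show ?thesis by (simp add: sum.delta')
qed
lemma ssum_two: "ssum n [i, j] = 0" by (simp add: ssum_apply ncvar_def)

lemma ncmul_two: "ncmul p q [i, j] = p [] * q [i, j] + p [i] * q [j] + p [i, j] * q []"
  by (simp add: ncmul_def numeral_2_eq_2 atMost_Suc)

lemma deg1:
  fixes g R :: "'k::field ncpoly"
  assumes c: "2 \<le> c" and g: "g \<in> freeLie n" and R: "R \<in> lcs n 2"
    and H: "lbr g (ssum n) - R \<in> idealI n c" and i: "i < n" and j: "j < n"
  shows "g [i] = g [j]"
proof -
  have "idealI n c \<subseteq> (lcs n 2 :: 'k ncpoly set)" by (rule idealI_lcs) (use c in auto)
  then have "lbr g (ssum n) - R \<in> lcs n 2" using H by blast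
  then have "(lbr g (ssum n) - R) [i, j] = 0" by (rule lcs_support) simp
  moreover have "R [i, j] = 0" using lcs_support[OF R, of "[i,j]"] by simp
  ultimately have "lbr g (ssum n) [i, j] = 0" by simp
  moreover have "lbr g (ssum n) [i, j] = g [i] - g [j]"
    using freeLie_nil[OF g] i j by (simp add: lbr_eq ncmul_two ssum_nil ssum_single ssum_two)
  ultimately show ?thesis by simp
qed

definition tau :: "nat \<Rightarrow> 'k::field ncpoly \<Rightarrow> 'k" where
  "tau n p = (\<Sum>i<n. p [i])"

lemma tau_add: "tau n (p + q) = tau n p + tau n q" by (simp add: tau_def sum.distrib)
lemma tau_diff: "tau n (p - q) = tau n p - tau n q" by (simp add: tau_def sum_subtractf)
lemma tau_lcs1: "p \<in> lcs n 1 \<Longrightarrow> tau n p = 0"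
  unfolding tau_def using lcs_support[of p n 1] by simp
lemma tau_perm:
  assumes "\<pi> permutes {..<n}"
  shows "tau n (perm_act \<pi> p) = tau n p"
proof -
  have "tau n (perm_act \<pi> p) = (\<Sum>i<n. p [inv \<pi> i])" by (simp add: tau_def perm_act_def)
  also have "\<dots> = (\<Sum>i<n. p [i])"
    using sum.permute[OF permutes_inv[OF assms], of "\<lambda>i. p [i]"] by (simp add: comp_def eq_commute)
  finally show ?thesis by (simp add: tau_def)
qed
lemma tau_lin1: "tau n (lin1 n g) = (\<Sum>i<n. g [i])"
proof -
  have "tau n (lin1 n g) = (\<Sum>i<n. \<Sum>k<n. g [k] * ncvar k [i])"
    by (simp add: tau_def lin1_def sum_fun_apply)
  also have "\<dots> = (\<Sum>i<n. g [i])"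
    by (intro sum.cong refl) (simp add: ncvar_def sum.delta' if_distrib cong: if_cong)
  finally show ?thesis .
qed

lemma expansion:
  fixes u g :: "'k::field ncpoly"
  assumes c: "2 \<le> c" and u: "u \<in> freeLie n" and g: "g \<in> lcs n m"
  shows "\<exists>R\<in>lcs n (m + 2). eps_rep c (u + g) (ssum n) - eps_rep c u (ssum n) = lbr (ssum n) g + R"
proof -
  let ?s = "ssum n :: 'k ncpoly"
  define D where "D k = (ad (u + g) ^^ k) ?s - (ad u ^^ k) ?s" for k
  have gL: "g \<in> freeLie n" using g lcs_freeLie by blast
  have ugL: "u + g \<in> freeLie n" by (rule subsp_add[OF subsp_freeLie u gL])
  have sL: "?s \<in> freeLie n" by (rule ssum_freeLie)
  have DSuc: "D (Suc k) = lbr (D k) (u + g) + lbr ((ad u ^^ k) ?s) g" for k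
    unfolding D_def ad_pow_Suc by (simp add: lbr_diff_left lbr_add_right algebra_simps)
  have D0: "D 0 = 0" by (simp add: D_def)
  have D1: "D 1 = lbr ?s g" unfolding One_nat_def DSuc D0 by simp
  have A1: "(ad u ^^ Suc k) ?s \<in> lcs n 1" for k
  proof -
    have "(ad u ^^ Suc k) ?s \<in> lcs n (0 + Suc k)" by (rule ad_pow_lcs[OF u]) (use sL in simp)
    then show ?thesis using lcs_mono[of 1 "Suc k" n] by auto
  qed
  have Dm1: "D (Suc k) \<in> lcs n (Suc m)" for k
  proof (induction k)
    case 0 show ?case unfolding D1[unfolded One_nat_def] by (rule lcs_br'[OF sL g])
  next
    case (Suc k)
    have 1: "lbr (D (Suc k)) (u + g) \<in> lcs n (Suc m)"
      using lcs_br[OF Suc.IH ugL] lcs_Suc_subset by blast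
    have "lbr ((ad u ^^ Suc k) ?s) g \<in> lcs n (m + 2)" by (rule lcs1_br[OF A1 g])
    then have 2: "lbr ((ad u ^^ Suc k) ?s) g \<in> lcs n (Suc m)" using lcs_mono[of "Suc m" "m+2" n] by auto
    show ?case unfolding DSuc[of "Suc k"] by (rule subsp_add[OF subsp_lcs 1 2])
  qed
  have Dm2: "D (Suc (Suc k)) \<in> lcs n (m + 2)" for k
  proof -
    have 1: "lbr (D (Suc k)) (u + g) \<in> lcs n (m + 2)"
      using lcs_br[OF Dm1 ugL] by simp
    have 2: "lbr ((ad u ^^ Suc k) ?s) g \<in> lcs n (m + 2)" by (rule lcs1_br[OF A1 g])
    show ?thesis unfolding DSuc[of "Suc k"] by (rule subsp_add[OF subsp_lcs 1 2])
  qed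
  define R where "R = (\<Sum>k\<in>{..<c} - {1}. ncsmul (1 / of_nat (fact k)) (D k))"
  have R: "R \<in> lcs n (m + 2)"
    unfolding R_def
  proof (intro subsp_sum[OF subsp_lcs] subsp_smul[OF subsp_lcs])
    fix k assume k: "k \<in> {..<c} - {1}"
    show "D k \<in> lcs n (m + 2)"
    proof (cases k)
      case 0 show ?thesis unfolding 0 D0 by (rule subsp_0[OF subsp_lcs])
    next
      case (Suc j)
      then obtain j' where "k = Suc (Suc j')" using k by (cases j) auto
      then show ?thesis using Dm2 by simp
    qed
  qed
  have "eps_rep c (u + g) ?s - eps_rep c u ?s = (\<Sum>k<c. ncsmul (1 / of_nat (fact k)) (D k))"
    unfolding eps_rep_diff D_def ..
  also have "\<dots> = ncsmul (1 / of_nat (fact 1)) (D 1) + R"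
    unfolding R_def using c by (subst sum.remove[of _ 1]) auto
  also have "\<dots> = lbr ?s g + R" unfolding D1 by simp
  finally show ?thesis using R by blast
qed


lemma main_claim:
  fixes u w :: "'k::field_char_0 ncpoly"
  assumes n: "2 \<le> n" and c: "1 \<le> c" and u: "u \<in> freeLie n" and w: "w \<in> freeLie n"
    and E: "eps_rep c w (ssum n) - eps_rep c u (ssum n) \<in> idealI n c"
    and T: "tau n w = tau n u"
  shows "\<exists>g\<in>lcs n (c - 1). w - u - g \<in> idealI n c"
proof -
  let ?s = "ssum n :: 'k ncpoly"
  let ?I = "idealI n c :: 'k ncpoly set"
  have sL: "?s \<in> freeLie n" by (rule ssum_freeLie)
  have "m \<le> c - 1 \<Longrightarrow> \<exists>g\<in>lcs n m. w - u - g \<in> ?I" for m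
  proof (induction m)
    case 0
    have "w - u \<in> lcs n 0" using subsp_diff[OF subsp_freeLie w u] by simp
    moreover have "w - u - (w - u) \<in> ?I" using subsp_0[OF subsp_idealI] by simp
    ultimately show ?case by blast
  next
    case (Suc m)
    have "m \<le> c - 1" using Suc.prems by simp
    then have "\<exists>g\<in>lcs n m. w - u - g \<in> ?I" by (rule Suc.IH)
    then obtain g where g: "g \<in> lcs n m" and wug: "w - u - g \<in> ?I" by blast
    have c2: "2 \<le> c" and cm: "m + 2 \<le> c" using Suc.prems by auto
    have gL: "g \<in> freeLie n" using g lcs_freeLie by blast
    have ugL: "u + g \<in> freeLie n" by (rule subsp_add[OF subsp_freeLie u gL])
    obtain R where R: "R \<in> lcs n (m + 2)"
      and ER: "eps_rep c (u + g) ?s - eps_rep c u ?s = lbr ?s g + R"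
      using expansion[OF c2 u g] by blast
    have "w - (u + g) \<in> ?I" using wug by (simp add: algebra_simps)
    then have E2: "eps_rep c w ?s - eps_rep c (u + g) ?s \<in> ?I"
      by (rule eps_rep_cong_u'[OF c w ugL sL])
    have "lbr ?s g + R = (eps_rep c w ?s - eps_rep c u ?s) - (eps_rep c w ?s - eps_rep c (u + g) ?s)"
      unfolding ER[symmetric] by simp
    also have "\<dots> \<in> ?I" by (rule subsp_diff[OF subsp_idealI E E2])
    finally have "- (lbr ?s g + R) \<in> ?I" by (rule subsp_uminus[OF subsp_idealI])
    moreover have "- (lbr ?s g + R) = lbr g ?s - R" using lbr_antisym[of ?s g] by simp
    ultimately have X: "lbr g ?s - R \<in> ?I" by simp
    show ?case
    proof (cases m)
      case 0
      have R2: "R \<in> lcs n 2" using R by (simp only: 0 add_0)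
      have g0: "g \<in> freeLie n" using gL .
      have eq: "g [i] = g [0]" if "i < n" for i
        by (rule deg1[OF c2 g0 R2 X that]) (use n in simp)
      have lin: "lin1 n g = ncsmul (g [0]) ?s"
        unfolding lin1_def ssum_def ncsmul_sum
      proof (rule sum.cong[OF refl])
        fix i assume "i \<in> {..<n}"
        then have "g [i] = g [0]" using eq[of i] by blast
        then show "ncsmul (g [i]) (ncvar i) = ncsmul (g [0]) (ncvar i)" by (rule arg_cong)
      qed
      have I1: "?I \<subseteq> lcs n 1" by (rule idealI_lcs) (use c in auto)
      have "tau n (w - u - g) = 0" using wug I1 tau_lcs1 by blast
      then have tg: "tau n g = 0" using T by (simp add: tau_diff)
      have "tau n g = tau n (lin1 n g) + tau n (g - lin1 n g)" by (simp add: tau_add[symmetric])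
      also have "tau n (g - lin1 n g) = 0" by (rule tau_lcs1[OF lin1_diff_lcs1[OF gL]])
      also have "tau n (lin1 n g) = of_nat n * g [0]"
      proof -
        have "(\<Sum>i<n. g [i]) = (\<Sum>i<n. g [0])"
        proof (rule sum.cong[OF refl])
          fix i assume "i \<in> {..<n}"
          then show "g [i] = g [0]" using eq[of i] by blast
        qed
        then show ?thesis unfolding tau_lin1 by simp
      qed
      finally have "of_nat n * g [0] = 0" using tg by simp
      then have "g [0] = 0" using n by simp
      then have "lin1 n g = 0" unfolding lin by simp
      then have "g \<in> lcs n 1" using lin1_diff_lcs1[OF gL] by simp
      then have "g \<in> lcs n (Suc m)" unfolding 0 by simp
      then show ?thesis using wug by blast
    next
      case (Suc k)
      have n0: "0 < n" using n by simp
      obtain g' where g': "g' \<in> lcs n (Suc (Suc k))" and gg: "g - g' \<in> ?I"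
        using torsion[OF n0 _ g[unfolded Suc] R[unfolded Suc] X] cm Suc by auto
      have "w - u - g' = (w - u - g) + (g - g')" by simp
      also have "\<dots> \<in> ?I" by (rule subsp_add[OF subsp_idealI wug gg])
      finally have "w - u - g' \<in> ?I" .
      moreover have "g' \<in> lcs n (Suc m)" using g' unfolding Suc .
      ultimately show ?thesis by blast
    qed
  qed
  then show ?thesis by simp
qed


lemma symLnc_Lnc: "U \<in> symLnc n c \<Longrightarrow> U \<in> Lnc n c" by (simp add: symLnc_def)

lemma sym_rep:
  assumes "U \<in> symLnc n c" "u \<in> U" "\<pi> permutes {..<n}"
  shows "perm_act \<pi> u - u \<in> idealI n c"
proof -
  have U: "U \<in> Lnc n c" by (rule symLnc_Lnc[OF assms(1)])
  have uL: "u \<in> freeLie n" using assms(2) Lnc_subset[OF U] by blast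
  have "U = cls n c u" using Lnc_some_cls[OF U] cls_eqI assms(2) Lnc_some[OF U] by metis
  then show ?thesis using sym_cls_iff[OF uL] assms by blast
qed

lemma preserve:
  fixes U C :: "'k::field ncpoly set"
  assumes c: "c \<ge> 1" and U: "U \<in> symLnc n c" and C: "C \<in> symLnc n c"
  shows "epsL n c U C \<in> symLnc n c"
proof -
  have UL: "U \<in> Lnc n c" and CL: "C \<in> Lnc n c" using U C by (auto simp: symLnc_def)
  define u where "u = (SOME u. u \<in> U)"
  define p where "p = (SOME p. p \<in> C)"
  have u: "u \<in> U" and p: "p \<in> C" unfolding u_def p_def by (rule Lnc_some[OF UL], rule Lnc_some[OF CL])
  have uL: "u \<in> freeLie n" and pL: "p \<in> freeLie n" using u p Lnc_subset UL CL by blast+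
  have e: "epsL n c U C = cls n c (eps_rep c u p)" by (rule epsL_eq[OF c UL CL u p])
  have "cls n c (eps_rep c u p) \<in> symLnc n c"
    unfolding sym_cls_iff[OF eps_rep_freeLie[OF uL pL]]
  proof (intro allI impI)
    fix \<pi> assume pi: "\<pi> permutes {..<n}"
    have puL: "perm_act \<pi> u \<in> freeLie n" by (rule perm_freeLie[OF pi uL])
    have 1: "eps_rep c (perm_act \<pi> u) (perm_act \<pi> p) - eps_rep c (perm_act \<pi> u) p \<in> idealI n c"
      by (rule eps_rep_cong_v[OF puL sym_rep[OF C p pi]])
    have 2: "eps_rep c (perm_act \<pi> u) p - eps_rep c u p \<in> idealI n c"
      by (rule eps_rep_cong_u'[OF c puL uL pL sym_rep[OF U u pi]])
    show "perm_act \<pi> (eps_rep c u p) - eps_rep c u p \<in> idealI n c"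
      unfolding perm_eps by (rule subsp_diff_trans[OF subsp_idealI 1 2])
  qed
  then show ?thesis unfolding e .
qed

lemma zero_freeLie: "0 \<in> freeLie n" by (rule subsp_0[OF subsp_freeLie])

lemma epsL_zero:
  assumes c: "c \<ge> 1"
  shows "epsL n c (cls n c 0) = (idL n c :: 'k::field ncpoly set \<Rightarrow> _)"
proof (rule ext)
  fix C :: "'k ncpoly set"
  show "epsL n c (cls n c 0) C = idL n c C"
  proof (cases "C \<in> Lnc n c")
    case True
    define p where "p = (SOME p. p \<in> C)"
    have p: "p \<in> C" unfolding p_def by (rule Lnc_some[OF True])
    have "epsL n c (cls n c 0) C = cls n c (eps_rep c 0 p)"
      by (rule epsL_eq[OF c cls_in_Lnc[OF zero_freeLie] True cls_self[OF zero_freeLie] p])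
    also have "\<dots> = cls n c p" unfolding eps_rep_zero[OF c] ..
    also have "\<dots> = C" using Lnc_some_cls[OF True] unfolding p_def by simp
    finally show ?thesis using True by (simp add: idL_def)
  next
    case False then show ?thesis by (simp add: epsL_def idL_def)
  qed
qed

lemma epsL_shift:
  fixes u u' g :: "'k::field ncpoly"
  assumes c: "c \<ge> 1" and U: "U \<in> Lnc n c" and u: "u \<in> U" and u': "u' \<in> freeLie n"
    and g: "g \<in> lcs n (c - 1)" and H: "u' - u - g \<in> idealI n c"
  shows "epsL n c U = epsL n c (cls n c u')"
proof (rule ext)
  fix C :: "'k ncpoly set"
  have uL: "u \<in> freeLie n" using u Lnc_subset[OF U] by blast
  show "epsL n c U C = epsL n c (cls n c u') C"
  proof (cases "C \<in> Lnc n c")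
    case True
    define p where "p = (SOME p. p \<in> C)"
    have p: "p \<in> C" unfolding p_def by (rule Lnc_some[OF True])
    have pL: "p \<in> freeLie n" using p Lnc_subset[OF True] by blast
    have 1: "epsL n c U C = cls n c (eps_rep c u p)" by (rule epsL_eq[OF c U True u p])
    have 2: "epsL n c (cls n c u') C = cls n c (eps_rep c u' p)"
      by (rule epsL_eq[OF c cls_in_Lnc[OF u'] True cls_self[OF u'] p])
    have "eps_rep c u' p - eps_rep c u p \<in> idealI n c"
      by (rule eps_rep_cong_u[OF c u' uL pL g H])
    then have "cls n c (eps_rep c u' p) = cls n c (eps_rep c u p)"
      using cls_eq_iff eps_rep_freeLie u' uL pL by blast
    then show ?thesis unfolding 1 2 by simp
  next
    case False then show ?thesis by (simp add: epsL_def)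
  qed
qed


theorem theorem2p3:
  fixes n c :: nat
  assumes "n \<ge> 2" and "c \<ge> 1"
  shows "(Inn_sym n c :: ('k::field_char_0 ncpoly set \<Rightarrow> 'k ncpoly set) set) =
    {epsL n c U | U. U \<in> symLnc n c - (gcLnc n c \<inter> symLnc n c)} \<union> {idL n c}"
proof
  have n: "2 \<le> n" and c: "1 \<le> c" using assms by auto
  let ?I = "idealI n c :: 'k ncpoly set"
  let ?s = "ssum n :: 'k ncpoly"
  have sL: "?s \<in> freeLie n" by (rule ssum_freeLie)
  show "(Inn_sym n c :: ('k ncpoly set \<Rightarrow> 'k ncpoly set) set) \<subseteq>
    {epsL n c U | U. U \<in> symLnc n c - (gcLnc n c \<inter> symLnc n c)} \<union> {idL n c}"
  proof
    fix x :: "'k ncpoly set \<Rightarrow> 'k ncpoly set"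
    assume "x \<in> Inn_sym n c"
    then obtain U where x: "x = epsL n c U" and UL: "U \<in> Lnc n c"
      and pres: "\<forall>C\<in>symLnc n c. epsL n c U C \<in> symLnc n c"
      unfolding Inn_sym_def by blast
    define u where "u = (SOME u. u \<in> U)"
    have u: "u \<in> U" unfolding u_def by (rule Lnc_some[OF UL])
    have uL: "u \<in> freeLie n" using u Lnc_subset[OF UL] by blast
    have s_sym: "cls n c ?s \<in> symLnc n c"
      unfolding sym_cls_iff[OF sL]
    proof (intro allI impI)
      fix \<pi> assume pi: "\<pi> permutes {..<n}"
      show "perm_act \<pi> ?s - ?s \<in> ?I" unfolding perm_ssum[OF pi] diff_self
        by (rule subsp_0[OF subsp_idealI])
    qed
    let ?P = "{\<pi>. \<pi> permutes {..<n}}"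
    have key: "\<exists>g\<in>lcs n (c - 1). perm_act \<pi> u - u - g \<in> ?I" if pi: "\<pi> \<in> ?P" for \<pi>
    proof -
      have pi': "\<pi> permutes {..<n}" using pi by simp
      have "epsL n c U (cls n c ?s) = cls n c (eps_rep c u ?s)"
        by (rule epsL_eq[OF c UL cls_in_Lnc[OF sL] u cls_self[OF sL]])
      then have "cls n c (eps_rep c u ?s) \<in> symLnc n c" using pres s_sym by metis
      then have "perm_act \<pi> (eps_rep c u ?s) - eps_rep c u ?s \<in> ?I"
        using sym_cls_iff[OF eps_rep_freeLie[OF uL sL]] pi' by blast
      then have E: "eps_rep c (perm_act \<pi> u) ?s - eps_rep c u ?s \<in> ?I"
        unfolding perm_eps perm_ssum[OF pi'] .
      show ?thesis
        by (rule main_claim[OF n c uL perm_freeLie[OF pi' uL] E tau_perm[OF pi']])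
    qed
    then obtain G where G: "\<And>\<pi>. \<pi> \<in> ?P \<Longrightarrow> G \<pi> \<in> lcs n (c - 1) \<and> perm_act \<pi> u - u - G \<pi> \<in> ?I"
      by metis
    have finP: "finite ?P" by (rule finite_permutations) simp
    have cardP: "card ?P = fact n" by (rule card_permutations) simp_all
    define N where "N = (of_nat (fact n) :: 'k)"
    have N0: "N \<noteq> 0" unfolding N_def by simp
    define u' where "u' = ncsmul (1 / N) (\<Sum>\<pi>\<in>?P. perm_act \<pi> u)"
    define g where "g = ncsmul (1 / N) (\<Sum>\<pi>\<in>?P. G \<pi>)"
    have u'L: "u' \<in> freeLie n" unfolding u'_def
      by (intro subsp_smul[OF subsp_freeLie] subsp_sum[OF subsp_freeLie] perm_freeLie[OF _ uL]) simp
    have gL: "g \<in> lcs n (c - 1)" unfolding g_def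
      by (intro subsp_smul[OF subsp_lcs] subsp_sum[OF subsp_lcs]) (use G in blast)
    have diff_eq: "u' - u - g = ncsmul (1 / N) (\<Sum>\<pi>\<in>?P. perm_act \<pi> u - u - G \<pi>)"
    proof (rule ext)
      fix w
      show "(u' - u - g) w = ncsmul (1 / N) (\<Sum>\<pi>\<in>?P. perm_act \<pi> u - u - G \<pi>) w"
        unfolding u'_def g_def minus_apply ncsmul_apply sum_fun_apply using N0
        by (simp add: sum_subtractf sum.distrib field_simps cardP N_def)
    qed
    have diff: "u' - u - g \<in> ?I" unfolding diff_eq
      by (intro subsp_smul[OF subsp_idealI] subsp_sum[OF subsp_idealI]) (use G in blast)
    have u'sym: "cls n c u' \<in> symLnc n c"
      unfolding sym_cls_iff[OF u'L]
    proof (intro allI impI)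
      fix \<sigma> assume sig: "\<sigma> permutes {..<n}"
      have "(\<Sum>\<pi>\<in>?P. perm_act (\<sigma> \<circ> \<pi>) u) = (\<Sum>\<pi>\<in>?P. perm_act \<pi> u)"
      proof (rule sum.reindex_bij_witness[where i = "\<lambda>\<pi>. inv \<sigma> \<circ> \<pi>" and j = "\<lambda>\<pi>. \<sigma> \<circ> \<pi>"])
        fix a assume "a \<in> ?P"
        show "inv \<sigma> \<circ> (\<sigma> \<circ> a) = a" using permutes_inv_o(2)[OF sig] by (simp add: o_assoc)
        show "\<sigma> \<circ> a \<in> ?P" using permutes_compose[of a "{..<n}" \<sigma>] \<open>a \<in> ?P\<close> sig by simp
      next
        fix b assume "b \<in> ?P"
        show "\<sigma> \<circ> (inv \<sigma> \<circ> b) = b" using permutes_inv_o(1)[OF sig] by (simp add: o_assoc)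
        show "inv \<sigma> \<circ> b \<in> ?P" using permutes_compose[of b "{..<n}" "inv \<sigma>"] permutes_inv[OF sig] \<open>b \<in> ?P\<close> by simp
      qed simp
      moreover have "perm_act \<sigma> (perm_act \<pi> u) = perm_act (\<sigma> \<circ> \<pi>) u" if "\<pi> \<in> ?P" for \<pi>
        using perm_act_comp[OF permutes_bij[of \<pi> "{..<n}"] permutes_bij[OF sig]] that by simp
      ultimately have "perm_act \<sigma> u' = u'"
        unfolding u'_def perm_act_smul perm_act_sum by simp
      then show "perm_act \<sigma> u' - u' \<in> ?I" using subsp_0[OF subsp_idealI] by simp
    qed
    have xe: "x = epsL n c (cls n c u')" unfolding x by (rule epsL_shift[OF c UL u u'L gL diff])
    show "x \<in> {epsL n c U | U. U \<in> symLnc n c - (gcLnc n c \<inter> symLnc n c)} \<union> {idL n c}"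
    proof (cases "cls n c u' \<in> gcLnc n c")
      case True
      then obtain g0 where g0: "g0 \<in> lcs n (c - 1)" and eq0: "cls n c u' = cls n c g0"
        unfolding gcLnc_def gammaL_eq by blast
      have g0L: "g0 \<in> freeLie n" using g0 lcs_freeLie by blast
      have ug0: "u' - g0 \<in> ?I" using eq0 cls_eq_iff[OF u'L g0L] by blast
      have "0 - u - (g - g0) = (u' - u - g) - (u' - g0)" by simp
      also have "\<dots> \<in> ?I" by (rule subsp_diff[OF subsp_idealI diff ug0])
      finally have H0: "0 - u - (g - g0) \<in> ?I" .
      have "x = epsL n c (cls n c 0)"
        unfolding x by (rule epsL_shift[OF c UL u zero_freeLie subsp_diff[OF subsp_lcs gL g0] H0])
      then have "x = idL n c" using epsL_zero[OF c] by simp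
      then show ?thesis by simp
    next
      case False
      then have "cls n c u' \<in> symLnc n c - (gcLnc n c \<inter> symLnc n c)" using u'sym by blast
      then show ?thesis using xe by blast
    qed
  qed
next
  have c: "1 \<le> c" using assms by auto
  show "{epsL n c U | U. U \<in> symLnc n c - (gcLnc n c \<inter> symLnc n c)} \<union> {idL n c}
      \<subseteq> (Inn_sym n c :: ('k ncpoly set \<Rightarrow> 'k ncpoly set) set)"
  proof
    fix x :: "'k ncpoly set \<Rightarrow> 'k ncpoly set"
    assume "x \<in> {epsL n c U | U. U \<in> symLnc n c - (gcLnc n c \<inter> symLnc n c)} \<union> {idL n c}"
    then show "x \<in> Inn_sym n c"
    proof
      assume "x \<in> {epsL n c U | U. U \<in> symLnc n c - (gcLnc n c \<inter> symLnc n c)}"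
      then obtain U where x: "x = epsL n c U" and U: "U \<in> symLnc n c" by blast
      have "\<forall>C\<in>symLnc n c. epsL n c U C \<in> symLnc n c" using preserve[OF c U] by blast
      then show ?thesis unfolding Inn_sym_def using x symLnc_Lnc[OF U] by blast
    next
      assume "x \<in> {idL n c}"
      moreover have "epsL n c (cls n c 0) = (idL n c :: 'k ncpoly set \<Rightarrow> 'k ncpoly set)" by (rule epsL_zero[OF c])
      ultimately have x: "x = epsL n c (cls n c 0)" by simp
      have ez: "epsL n c (cls n c 0) = (idL n c :: 'k ncpoly set \<Rightarrow> 'k ncpoly set)" by (rule epsL_zero[OF c])
      have "\<forall>C\<in>symLnc n c. epsL n c (cls n c (0::'k ncpoly)) C \<in> symLnc n c"
      proof
        fix C :: "'k ncpoly set" assume C: "C \<in> symLnc n c"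
        then have "C \<in> Lnc n c" by (rule symLnc_Lnc)
        then have "epsL n c (cls n c 0) C = C" unfolding ez by (simp add: idL_def)
        then show "epsL n c (cls n c 0) C \<in> symLnc n c" using C by simp
      qed
      then show ?thesis unfolding Inn_sym_def using x cls_in_Lnc[OF zero_freeLie] by blast
    qed
  qed
qed


end
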